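(* Let $H\subset G$ be a subgroup which maps surjectively onto $K$ under the canonical map $p:G\to K$. Then the generator $e\in\mathbb{Z}\subset G$ belongs to $H$.
   Context: Let $\mathrm{Hig}=\langle a,b,c,d\mid a^{-1}ba=b^2,\ b^{-1}cb=c^2,\ c^{-1}dc=d^2,\ d^{-1}ad=a^2\rangle$ be the Higman group, fix $z\in\mathrm{Hig}$ of infinite order and let $K=\mathrm{Hig}*_{\langle z\rangle}\mathrm{Hig}$ (amalgamated free product along $\langle z\rangle$). One has $H^2(K;\mathbb{Z})\cong\mathbb{Z}$; let $\gamma$ be a generator and let $1\to\mathbb{Z}\to L\to K\to1$ be the central extension classified by $\gamma$. Let $1\to\mathbb{Z}\to N\to\mathbb{Z}^2\to1$ be the central extension classified by a generator of $H^2(\mathbb{Z}^2;\mathbb{Z})\cong\mathbb{Z}$. Embed $\mathbb{Z}$ diagonally as a central subgroup of $N\times L$ (via the two central subgroups $\mathbb{Z}$) and set $G=(N\times L)/\mathbb{Z}$. Regard $N\subset G$ via $n\mapsto[(n,1)]$ and $\mathbb{Z}\subset N\subset G$ (central subgroup of $N$); $e$ denotes a generator of this $\mathbb{Z}$. The canonical map $p:G\to K$ is $[(n,l)]\mapsto$ image of $l$ under $L\to L/\mathbb{Z}=K$. *)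

theory Defs
  imports "HOL-Algebra.Coset"
begin

text \<open>Words over generators 'a: a letter (x,True) is x, (x,False) is x inverse.\<close>

type_synonym 'a word = "('a \<times> bool) list"

definition inv_word :: "'a word \<Rightarrow> 'a word" where
  "inv_word w = rev (map (\<lambda>(x,b). (x, \<not> b)) w)"

definition map_word :: "('a \<Rightarrow> 'b) \<Rightarrow> 'a word \<Rightarrow> 'b word" where
  "map_word f w = map (\<lambda>(x,b). (f x, b)) w"

inductive pres_eq :: "'a word set \<Rightarrow> 'a word \<Rightarrow> 'a word \<Rightarrow> bool" for R where
  refl: "pres_eq R w w"
| sym: "pres_eq R u v \<Longrightarrow> pres_eq R v u"
| trans: "pres_eq R u v \<Longrightarrow> pres_eq R v w \<Longrightarrow> pres_eq R u w"
| cancel: "pres_eq R (u @ [(x,b),(x,\<not> b)] @ v) (u @ v)"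
| relator: "r \<in> R \<Longrightarrow> pres_eq R (u @ r @ v) (u @ v)"

definition pres_group :: "'a word set \<Rightarrow> ('a word set) monoid" where
  "pres_group R = \<lparr> carrier = range (\<lambda>w. {v. pres_eq R w v}),
                    mult = (\<lambda>A B. {v. \<exists>a\<in>A. \<exists>b\<in>B. pres_eq R (a @ b) v}),
                    one = {v. pres_eq R [] v} \<rparr>"

datatype hgen = Ga | Gb | Gc | Gd

text \<open>Relator of x^-1 y x = y^2, i.e. x^-1 y x y^-1 y^-1.\<close>
definition hig_relator :: "hgen \<Rightarrow> hgen \<Rightarrow> hgen word" where
  "hig_relator x y = [(x,False),(y,True),(x,True),(y,False),(y,False)]"

definition hig_rels :: "hgen word set" where
  "hig_rels = {hig_relator Ga Gb, hig_relator Gb Gc, hig_relator Gc Gd, hig_relator Gd Ga}"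

definition Hig :: "hgen word set monoid" where
  "Hig = pres_group hig_rels"

text \<open>K = Hig *_<z> Hig: two copies of Hig, with the two copies of z identified.\<close>
definition amalg_rels :: "hgen word set \<Rightarrow> (hgen + hgen) word set" where
  "amalg_rels z = (let w = (SOME w. w \<in> z) in
      map_word Inl ` hig_rels \<union> map_word Inr ` hig_rels
      \<union> {map_word Inl w @ inv_word (map_word Inr w)})"

definition Kam :: "hgen word set \<Rightarrow> (hgen + hgen) word set monoid" where
  "Kam z = pres_group (amalg_rels z)"

definition cocycle2 :: "('g,'m) monoid_scheme \<Rightarrow> ('g \<Rightarrow> 'g \<Rightarrow> int) \<Rightarrow> bool" where
  "cocycle2 K f \<longleftrightarrow> (\<forall>g\<in>carrier K. \<forall>h\<in>carrier K. \<forall>k\<in>carrier K.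
      f g h + f (g \<otimes>\<^bsub>K\<^esub> h) k = f h k + f g (h \<otimes>\<^bsub>K\<^esub> k))"

definition coboundary2 :: "('g,'m) monoid_scheme \<Rightarrow> ('g \<Rightarrow> 'g \<Rightarrow> int) \<Rightarrow> bool" where
  "coboundary2 K f \<longleftrightarrow> (\<exists>\<phi> :: 'g \<Rightarrow> int. \<forall>g\<in>carrier K. \<forall>h\<in>carrier K.
      f g h = \<phi> g + \<phi> h - \<phi> (g \<otimes>\<^bsub>K\<^esub> h))"

definition H2_generator :: "('g,'m) monoid_scheme \<Rightarrow> ('g \<Rightarrow> 'g \<Rightarrow> int) \<Rightarrow> bool" where
  "H2_generator K f \<longleftrightarrow> cocycle2 K f \<and>
     (\<forall>f'. cocycle2 K f' \<longrightarrow> (\<exists>n::int. coboundary2 K (\<lambda>g h. f' g h - n * f g h)))"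

text \<open>The central extension 1 -> Z -> Z x_f K -> K -> 1 classified by the cocycle f.\<close>
definition ext_group :: "('g,'m) monoid_scheme \<Rightarrow> ('g \<Rightarrow> 'g \<Rightarrow> int) \<Rightarrow> (int \<times> 'g) monoid" where
  "ext_group K f = \<lparr> carrier = UNIV \<times> carrier K,
      mult = (\<lambda>(m,g) (n,h). (m + n + f g h, g \<otimes>\<^bsub>K\<^esub> h)),
      one = (- f \<one>\<^bsub>K\<^esub> \<one>\<^bsub>K\<^esub>, \<one>\<^bsub>K\<^esub>) \<rparr>"

definition ext_central :: "('g,'m) monoid_scheme \<Rightarrow> ('g \<Rightarrow> 'g \<Rightarrow> int) \<Rightarrow> int \<Rightarrow> int \<times> 'g" where
  "ext_central K f n = (n - f \<one>\<^bsub>K\<^esub> \<one>\<^bsub>K\<^esub>, \<one>\<^bsub>K\<^esub>)"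

definition Z2 :: "(int \<times> int) monoid" where
  "Z2 = \<lparr> carrier = UNIV, mult = (\<lambda>(a,b) (c,d). (a + c, b + d)), one = (0,0) \<rparr>"

definition NL :: "hgen word set \<Rightarrow> _ \<Rightarrow> _ \<Rightarrow> _" where
  "NL z fK fN = ext_group Z2 fN \<times>\<times> ext_group (Kam z) fK"

definition diagZ :: "hgen word set \<Rightarrow> _ \<Rightarrow> _ \<Rightarrow> _" where
  "diagZ z fK fN = {(ext_central Z2 fN n, ext_central (Kam z) fK n) | n. True}"

definition Ggrp :: "hgen word set \<Rightarrow> _ \<Rightarrow> _ \<Rightarrow> _" where
  "Ggrp z fK fN = NL z fK fN Mod diagZ z fK fN"

definition e_elem :: "hgen word set \<Rightarrow> _ \<Rightarrow> _ \<Rightarrow> _" where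
  "e_elem z fK fN = diagZ z fK fN #>\<^bsub>NL z fK fN\<^esub>
      (ext_central Z2 fN 1, \<one>\<^bsub>ext_group (Kam z) fK\<^esub>)"

definition p_map :: "(('n \<times> (int \<times> 'k)) set) \<Rightarrow> 'k" where
  "p_map X = (THE k. \<exists>x\<in>X. snd (snd x) = k)"

end

theory Submission
  imports Defs
begin


definition cls :: "'a word set \<Rightarrow> 'a word \<Rightarrow> 'a word set" where
  "cls R w = {v. pres_eq R w v}"

lemma pres_eq_cong: "pres_eq R u v \<Longrightarrow> pres_eq R (p @ u @ q) (p @ v @ q)"
proof (induction rule: pres_eq.induct)
  case (refl w) then show ?case by (rule pres_eq.refl)
next
  case (sym u v) then show ?case by (blast intro: pres_eq.sym)
next
  case (trans u v w) then show ?case by (metis pres_eq.trans)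
next
  case (cancel u x b v)
  have "pres_eq R ((p @ u) @ [(x,b),(x,\<not> b)] @ (v @ q)) ((p @ u) @ (v @ q))"
    by (rule pres_eq.cancel)
  then show ?case by simp
next
  case (relator r u v)
  have "pres_eq R ((p @ u) @ r @ (v @ q)) ((p @ u) @ (v @ q))"
    by (rule pres_eq.relator[OF relator])
  then show ?case by simp
qed

lemma pres_eq_app: "pres_eq R a a' \<Longrightarrow> pres_eq R b b' \<Longrightarrow> pres_eq R (a @ b) (a' @ b')"
  using pres_eq_cong[of R a a' "[]" b] pres_eq_cong[of R b b' a' "[]"]
  by (metis append_Nil append_Nil2 pres_eq.trans)

lemma cls_eq_iff: "cls R u = cls R v \<longleftrightarrow> pres_eq R u v"
proof
  assume "cls R u = cls R v"
  then have "v \<in> cls R u" by (auto simp: cls_def intro: pres_eq.refl)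
  then show "pres_eq R u v" by (simp add: cls_def)
next
  assume "pres_eq R u v"
  then show "cls R u = cls R v"
    unfolding cls_def by (auto intro: pres_eq.trans pres_eq.sym)
qed

lemma cls_mem: "w \<in> cls R w" by (simp add: cls_def pres_eq.refl)

lemma mem_cls: "v \<in> cls R w \<Longrightarrow> cls R v = cls R w"
  unfolding cls_eq_iff by (simp add: cls_def pres_eq.sym)

lemma pres_carrier: "carrier (pres_group R) = range (cls R)"
  by (simp add: pres_group_def cls_def[abs_def])

lemma pres_one: "\<one>\<^bsub>pres_group R\<^esub> = cls R []"
  by (simp add: pres_group_def cls_def)

lemma pres_mult: "cls R a \<otimes>\<^bsub>pres_group R\<^esub> cls R b = cls R (a @ b)"
proof -
  have "{v. \<exists>a'\<in>cls R a. \<exists>b'\<in>cls R b. pres_eq R (a' @ b') v} = cls R (a @ b)"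
  proof (auto simp: cls_def)
    fix a' b' v assume "pres_eq R a a'" "pres_eq R b b'" "pres_eq R (a' @ b') v"
    then show "pres_eq R (a @ b) v" by (meson pres_eq.trans pres_eq_app)
  next
    fix v assume "pres_eq R (a @ b) v"
    then show "\<exists>a'. pres_eq R a a' \<and> (\<exists>b'. pres_eq R b b' \<and> pres_eq R (a' @ b') v)"
      by (meson pres_eq.refl)
  qed
  then show ?thesis by (simp add: pres_group_def)
qed

lemma inv_word_Cons: "inv_word ((x,b) # w) = inv_word w @ [(x, \<not> b)]"
  by (simp add: inv_word_def)

lemma inv_word_Nil[simp]: "inv_word [] = []" by (simp add: inv_word_def)

lemma inv_word_append: "inv_word (u @ v) = inv_word v @ inv_word u"
  by (simp add: inv_word_def)

lemma pres_inv_l: "pres_eq R (inv_word w @ w) []"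
proof (induction w)
  case Nil then show ?case by (simp add: pres_eq.refl)
next
  case (Cons l w)
  obtain x b where l: "l = (x,b)" by force
  have "pres_eq R (inv_word w @ [(x,\<not> b),(x, \<not>\<not> b)] @ w) (inv_word w @ w)"
    by (rule pres_eq.cancel)
  moreover have "inv_word (l # w) @ l # w = inv_word w @ [(x,\<not> b),(x, \<not>\<not> b)] @ w"
    using l by (simp add: inv_word_Cons)
  ultimately show ?case using Cons.IH by (metis pres_eq.trans)
qed

lemma group_pres: "group (pres_group R)"
proof (rule groupI)
  fix x y assume "x \<in> carrier (pres_group R)" "y \<in> carrier (pres_group R)"
  then show "x \<otimes>\<^bsub>pres_group R\<^esub> y \<in> carrier (pres_group R)"
    by (auto simp: pres_carrier pres_mult)
next
  show "\<one>\<^bsub>pres_group R\<^esub> \<in> carrier (pres_group R)" by (simp add: pres_carrier pres_one)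
next
  fix x y z assume "x \<in> carrier (pres_group R)" "y \<in> carrier (pres_group R)" "z \<in> carrier (pres_group R)"
  then show "x \<otimes>\<^bsub>pres_group R\<^esub> y \<otimes>\<^bsub>pres_group R\<^esub> z =
       x \<otimes>\<^bsub>pres_group R\<^esub> (y \<otimes>\<^bsub>pres_group R\<^esub> z)"
    by (auto simp: pres_carrier pres_mult)
next
  fix x assume "x \<in> carrier (pres_group R)"
  then show "\<one>\<^bsub>pres_group R\<^esub> \<otimes>\<^bsub>pres_group R\<^esub> x = x"
    by (auto simp: pres_carrier pres_mult pres_one)
next
  fix x assume "x \<in> carrier (pres_group R)"
  then obtain w where "x = cls R w" by (auto simp: pres_carrier)
  then show "\<exists>y\<in>carrier (pres_group R). y \<otimes>\<^bsub>pres_group R\<^esub> x = \<one>\<^bsub>pres_group R\<^esub>"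
    by (intro bexI[of _ "cls R (inv_word w)"])
       (auto simp: pres_carrier pres_mult pres_one cls_eq_iff pres_inv_l)
qed

lemma pres_inv: "inv\<^bsub>pres_group R\<^esub> (cls R w) = cls R (inv_word w)"
proof -
  interpret group "pres_group R" by (rule group_pres)
  show ?thesis
    by (rule inv_equality) (auto simp: pres_carrier pres_mult pres_one cls_eq_iff pres_inv_l)
qed

lemma pres_relator: "r \<in> R \<Longrightarrow> cls R r = cls R []"
  using pres_eq.relator[of r R "[]" "[]"] by (simp add: cls_eq_iff)



lemma group_Hig: "group Hig" by (simp add: Hig_def group_pres)

definition orb :: "hgen word set \<Rightarrow> hgen word set \<Rightarrow> hgen word set set" where
  "orb z x = {z [^]\<^bsub>Hig\<^esub> (n::int) \<otimes>\<^bsub>Hig\<^esub> x | n. True}"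

definition orep :: "hgen word set \<Rightarrow> hgen word set \<Rightarrow> hgen word set" where
  "orep z x = (SOME y. y \<in> orb z x)"

definition beta :: "hgen word set \<Rightarrow> hgen word set \<Rightarrow> int" where
  "beta z x = (THE n. x = z [^]\<^bsub>Hig\<^esub> n \<otimes>\<^bsub>Hig\<^esub> orep z x)"

locale zctx =
  fixes z
  assumes zc: "z \<in> carrier Hig"
    and zinf: "\<forall>n::int. n \<noteq> 0 \<longrightarrow> z [^]\<^bsub>Hig\<^esub> n \<noteq> \<one>\<^bsub>Hig\<^esub>"
begin

interpretation H: group Hig by (rule group_Hig)

lemma pow_inj: "x \<in> carrier Hig \<Longrightarrow> z [^]\<^bsub>Hig\<^esub> (n::int) \<otimes>\<^bsub>Hig\<^esub> x = z [^]\<^bsub>Hig\<^esub> (m::int) \<otimes>\<^bsub>Hig\<^esub> x \<Longrightarrow> n = m"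
proof (rule ccontr)
  assume x: "x \<in> carrier Hig" and e: "z [^]\<^bsub>Hig\<^esub> n \<otimes>\<^bsub>Hig\<^esub> x = z [^]\<^bsub>Hig\<^esub> m \<otimes>\<^bsub>Hig\<^esub> x" and nm: "n \<noteq> m"
  from e x have "z [^]\<^bsub>Hig\<^esub> n = z [^]\<^bsub>Hig\<^esub> m" using zc by (simp add: H.right_cancel)
  then have "z [^]\<^bsub>Hig\<^esub> (n - m) = \<one>\<^bsub>Hig\<^esub>" using zc by (simp add: H.int_pow_diff)
  with zinf nm show False by auto
qed

lemma orb_shift: "x \<in> carrier Hig \<Longrightarrow> orb z (z \<otimes>\<^bsub>Hig\<^esub> x) = orb z x"
proof -
  assume x: "x \<in> carrier Hig"
  have e: "z [^]\<^bsub>Hig\<^esub> (n::int) \<otimes>\<^bsub>Hig\<^esub> (z \<otimes>\<^bsub>Hig\<^esub> x) = z [^]\<^bsub>Hig\<^esub> (n+1) \<otimes>\<^bsub>Hig\<^esub> x" for n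
    using x zc by (simp add: H.int_pow_mult H.m_assoc)
  have e2: "z [^]\<^bsub>Hig\<^esub> (n::int) \<otimes>\<^bsub>Hig\<^esub> x = z [^]\<^bsub>Hig\<^esub> (n - 1) \<otimes>\<^bsub>Hig\<^esub> (z \<otimes>\<^bsub>Hig\<^esub> x)" for n
    using e[of "n - 1"] by simp
  show ?thesis unfolding orb_def
    by (auto, metis e, metis e2)
qed

lemma orep_in: "x \<in> carrier Hig \<Longrightarrow> orep z x \<in> orb z x"
  unfolding orep_def by (rule someI[of _ x]) (auto simp: orb_def intro!: exI[of _ 0])

lemma orep_carrier: "x \<in> carrier Hig \<Longrightarrow> orep z x \<in> carrier Hig"
  using orep_in[of x] zc by (auto simp: orb_def)

lemma beta_spec: assumes x: "x \<in> carrier Hig"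
  shows "x = z [^]\<^bsub>Hig\<^esub> (beta z x) \<otimes>\<^bsub>Hig\<^esub> orep z x"
proof -
  obtain m where m: "orep z x = z [^]\<^bsub>Hig\<^esub> (m::int) \<otimes>\<^bsub>Hig\<^esub> x"
    using orep_in[OF x] by (auto simp: orb_def)
  have ex: "x = z [^]\<^bsub>Hig\<^esub> (-m) \<otimes>\<^bsub>Hig\<^esub> orep z x"
    using m x zc by (simp add: H.m_assoc[symmetric] H.int_pow_mult[symmetric])
  show ?thesis unfolding beta_def
  proof (rule theI[of _ "-m"])
    show "x = z [^]\<^bsub>Hig\<^esub> (-m) \<otimes>\<^bsub>Hig\<^esub> orep z x" by (rule ex)
  next
    fix n :: int assume "x = z [^]\<^bsub>Hig\<^esub> n \<otimes>\<^bsub>Hig\<^esub> orep z x"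
    with ex have "z [^]\<^bsub>Hig\<^esub> n \<otimes>\<^bsub>Hig\<^esub> orep z x = z [^]\<^bsub>Hig\<^esub> (-m) \<otimes>\<^bsub>Hig\<^esub> orep z x" by simp
    then show "n = -m" by (rule pow_inj[OF orep_carrier[OF x]])
  qed
qed

lemma beta_shift: assumes x: "x \<in> carrier Hig"
  shows "beta z (z \<otimes>\<^bsub>Hig\<^esub> x) = beta z x + 1"
proof -
  have zx: "z \<otimes>\<^bsub>Hig\<^esub> x \<in> carrier Hig" using x zc by simp
  have r: "orep z (z \<otimes>\<^bsub>Hig\<^esub> x) = orep z x" by (simp add: orep_def orb_shift[OF x])
  have "z \<otimes>\<^bsub>Hig\<^esub> x = z [^]\<^bsub>Hig\<^esub> (beta z x + 1) \<otimes>\<^bsub>Hig\<^esub> orep z x"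
  proof -
    have "z \<otimes>\<^bsub>Hig\<^esub> x = z \<otimes>\<^bsub>Hig\<^esub> (z [^]\<^bsub>Hig\<^esub> (beta z x) \<otimes>\<^bsub>Hig\<^esub> orep z x)"
      using beta_spec[OF x] by simp
    also have "\<dots> = (z [^]\<^bsub>Hig\<^esub> (1::int) \<otimes>\<^bsub>Hig\<^esub> z [^]\<^bsub>Hig\<^esub> (beta z x)) \<otimes>\<^bsub>Hig\<^esub> orep z x"
      using zc orep_carrier[OF x] by (simp add: H.m_assoc)
    also have "\<dots> = z [^]\<^bsub>Hig\<^esub> (1 + beta z x) \<otimes>\<^bsub>Hig\<^esub> orep z x"
      using zc by (simp only: H.int_pow_mult)
    finally show ?thesis by (simp add: add.commute)
  qed
  moreover have "z \<otimes>\<^bsub>Hig\<^esub> x = z [^]\<^bsub>Hig\<^esub> (beta z (z \<otimes>\<^bsub>Hig\<^esub> x)) \<otimes>\<^bsub>Hig\<^esub> orep z x"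
    using beta_spec[OF zx] r by simp
  ultimately have "z [^]\<^bsub>Hig\<^esub> (beta z (z \<otimes>\<^bsub>Hig\<^esub> x)) \<otimes>\<^bsub>Hig\<^esub> orep z x = z [^]\<^bsub>Hig\<^esub> (beta z x + 1) \<otimes>\<^bsub>Hig\<^esub> orep z x" by simp
  then show ?thesis by (rule pow_inj[OF orep_carrier[OF x]])
qed

end


abbreviation hc :: "hgen word \<Rightarrow> hgen word set" where "hc \<equiv> cls hig_rels"

lemma Hig_carrier: "carrier Hig = range hc" by (simp add: Hig_def pres_carrier)
lemma Hig_mult: "hc a \<otimes>\<^bsub>Hig\<^esub> hc b = hc (a @ b)" by (simp add: Hig_def pres_mult)
lemma Hig_one: "\<one>\<^bsub>Hig\<^esub> = hc []" by (simp add: Hig_def pres_one)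
lemma Hig_inv: "inv\<^bsub>Hig\<^esub> (hc w) = hc (inv_word w)" by (simp add: Hig_def pres_inv)
lemma hc_carrier[simp]: "hc w \<in> carrier Hig" by (simp add: Hig_carrier)

fun act :: "hgen word set \<Rightarrow> (hgen + hgen) \<times> bool \<Rightarrow> hgen word set \<times> int \<Rightarrow> hgen word set \<times> int" where
  "act z (Inl y, b) (x, n) = (hc [(y,b)] \<otimes>\<^bsub>Hig\<^esub> x, n)"
| "act z (Inr y, b) (x, n) = (hc [(y,b)] \<otimes>\<^bsub>Hig\<^esub> x, n + beta z x - beta z (hc [(y,b)] \<otimes>\<^bsub>Hig\<^esub> x))"

primrec rho :: "hgen word set \<Rightarrow> (hgen + hgen) word \<Rightarrow> hgen word set \<times> int \<Rightarrow> hgen word set \<times> int" where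
  "rho z [] = id"
| "rho z (l # w) = act z l \<circ> rho z w"

definition Tsh :: "int \<Rightarrow> hgen word set \<times> int \<Rightarrow> hgen word set \<times> int" where
  "Tsh j p = (fst p, snd p + j)"

lemma rho_append: "rho z (u @ v) = rho z u \<circ> rho z v"
  by (induction u) auto

lemma map_word_Cons[simp]: "map_word f ((y,b) # w) = (f y, b) # map_word f w"
  by (simp add: map_word_def)
lemma map_word_Nil[simp]: "map_word f [] = []" by (simp add: map_word_def)
lemma map_word_append: "map_word f (u @ v) = map_word f u @ map_word f v"
  by (simp add: map_word_def)
lemma inv_map_word: "inv_word (map_word f w) = map_word f (inv_word w)"
  by (simp add: inv_word_def map_word_def rev_map case_prod_beta)

interpretation H: group Hig by (rule group_Hig)

lemma hc_Cons: "hc (l # w) = hc [l] \<otimes>\<^bsub>Hig\<^esub> hc w"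
  by (simp add: Hig_mult)

lemma rho_Inl: "x \<in> carrier Hig \<Longrightarrow> rho z (map_word Inl u) (x, n) = (hc u \<otimes>\<^bsub>Hig\<^esub> x, n)"
proof (induction u arbitrary: x n)
  case Nil then show ?case by (simp add: Hig_one[symmetric])
next
  case (Cons l u)
  obtain y b where l: "l = (y,b)" by force
  have "hc (l # u) \<otimes>\<^bsub>Hig\<^esub> x = hc [l] \<otimes>\<^bsub>Hig\<^esub> (hc u \<otimes>\<^bsub>Hig\<^esub> x)"
    using Cons.prems by (metis H.m_assoc hc_Cons hc_carrier)
  then show ?case using Cons l by simp
qed

lemma rho_Inr: "x \<in> carrier Hig \<Longrightarrow> rho z (map_word Inr u) (x, n) =
   (hc u \<otimes>\<^bsub>Hig\<^esub> x, n + beta z x - beta z (hc u \<otimes>\<^bsub>Hig\<^esub> x))"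
proof (induction u arbitrary: x n)
  case Nil then show ?case by (simp add: Hig_one[symmetric])
next
  case (Cons l u)
  obtain y b where l: "l = (y,b)" by force
  have "hc (l # u) \<otimes>\<^bsub>Hig\<^esub> x = hc [l] \<otimes>\<^bsub>Hig\<^esub> (hc u \<otimes>\<^bsub>Hig\<^esub> x)"
    using Cons.prems by (metis H.m_assoc hc_Cons hc_carrier)
  then show ?case using Cons l by simp
qed

lemma act_form: "x \<in> carrier Hig \<Longrightarrow> \<exists>y\<in>carrier Hig. \<exists>d. \<forall>n. act z l (x, n) = (y, n + d)"
proof -
  assume x: "x \<in> carrier Hig"
  obtain a b where l: "l = (a,b)" by force
  show ?thesis
  proof (cases a)
    case (Inl y) then show ?thesis using l x by auto
  next
    case (Inr y) then show ?thesis using l x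
      by (auto intro!: bexI[of _ "hc [(y,b)] \<otimes>\<^bsub>Hig\<^esub> x"] exI[of _ "beta z x - beta z (hc [(y,b)] \<otimes>\<^bsub>Hig\<^esub> x)"])
  qed
qed

lemma rho_form: "x \<in> carrier Hig \<Longrightarrow> \<exists>y\<in>carrier Hig. \<exists>d. \<forall>n. rho z w (x, n) = (y, n + d)"
proof (induction w arbitrary: x)
  case Nil then show ?case by (auto intro!: exI[of _ 0])
next
  case (Cons l w)
  then obtain y d where y: "y \<in> carrier Hig" "\<forall>n. rho z w (x, n) = (y, n + d)" by blast
  then obtain y' d' where "y' \<in> carrier Hig" "\<forall>n. act z l (y, n) = (y', n + d')" using act_form by blast
  then show ?case using y by (auto intro!: bexI[of _ y'] exI[of _ "d + d'"] simp: add.assoc)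
qed

lemma rho_carrier: "x \<in> carrier Hig \<Longrightarrow> fst (rho z w (x, n)) \<in> carrier Hig"
  using rho_form[of x z w] by auto

lemma rho_Tsh: "x \<in> carrier Hig \<Longrightarrow> rho z w (Tsh j (x, n)) = Tsh j (rho z w (x, n))"
  using rho_form[of x z w] by (auto simp: Tsh_def algebra_simps)

lemma letter_inv: "hc [(y,b)] \<otimes>\<^bsub>Hig\<^esub> hc [(y,\<not> b)] = \<one>\<^bsub>Hig\<^esub>"
proof -
  have "pres_eq hig_rels ([] @ [(y,b),(y,\<not> b)] @ []) ([] @ [])" by (rule pres_eq.cancel)
  then show ?thesis by (simp add: Hig_mult Hig_one cls_eq_iff)
qed

lemma act_cancel: "x \<in> carrier Hig \<Longrightarrow> act z (a, b) (act z (a, \<not> b) (x, n)) = (x, n)"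
proof (cases a)
  case (Inl y)
  assume x: "x \<in> carrier Hig"
  have "hc [(y,b)] \<otimes>\<^bsub>Hig\<^esub> (hc [(y,\<not> b)] \<otimes>\<^bsub>Hig\<^esub> x) = x"
    using letter_inv[of y b] x by (simp add: H.m_assoc[symmetric])
  then show ?thesis using Inl by simp
next
  case (Inr y)
  assume x: "x \<in> carrier Hig"
  have "hc [(y,b)] \<otimes>\<^bsub>Hig\<^esub> (hc [(y,\<not> b)] \<otimes>\<^bsub>Hig\<^esub> x) = x"
    using letter_inv[of y b] x by (simp add: H.m_assoc[symmetric])
  then show ?thesis using Inr by simp
qed



definition w0 :: "hgen word set \<Rightarrow> hgen word" where "w0 z = (SOME w. w \<in> z)"

lemma amalg_rels_eq: "amalg_rels z = map_word Inl ` hig_rels \<union> map_word Inr ` hig_rels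
   \<union> {map_word Inl (w0 z) @ map_word Inr (inv_word (w0 z))}"
  by (simp add: amalg_rels_def Let_def w0_def inv_map_word)

lemma Tsh_0[simp]: "Tsh 0 p = p" by (simp add: Tsh_def)
lemma Tsh_Tsh[simp]: "Tsh j (Tsh k p) = Tsh (j + k) p" by (simp add: Tsh_def algebra_simps)

context zctx begin

lemma hc_w0: "hc (w0 z) = z"
proof -
  obtain w where w: "z = hc w" using zc by (auto simp: Hig_carrier)
  have "w0 z \<in> z" unfolding w0_def by (rule someI[of _ w]) (simp add: w cls_mem)
  then show ?thesis using w mem_cls by metis
qed

lemma rho_pair: "x \<in> carrier Hig \<Longrightarrow> \<exists>y m. rho z w (x, n) = (y, m) \<and> y \<in> carrier Hig"
  using rho_carrier[of x z w n] by (metis prod.collapse)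

lemma rho_relator:
  assumes r: "r \<in> amalg_rels z"
  shows "\<exists>j. \<forall>x\<in>carrier Hig. \<forall>n. rho z r (x, n) = Tsh j (x, n)"
proof -
  consider (L) r' where "r' \<in> hig_rels" "r = map_word Inl r'"
    | (R) r' where "r' \<in> hig_rels" "r = map_word Inr r'"
    | (Z) "r = map_word Inl (w0 z) @ map_word Inr (inv_word (w0 z))"
    using r by (auto simp: amalg_rels_eq)
  then show ?thesis
  proof cases
    case (L r')
    have "hc r' = \<one>\<^bsub>Hig\<^esub>" using L(1) by (simp add: pres_relator Hig_one)
    then show ?thesis using L by (auto intro!: exI[of _ 0] simp: rho_Inl)
  next
    case (R r')
    have "hc r' = \<one>\<^bsub>Hig\<^esub>" using R(1) by (simp add: pres_relator Hig_one)
    then show ?thesis using R by (auto intro!: exI[of _ 0] simp: rho_Inr)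
  next
    case Z
    show ?thesis
    proof (intro exI ballI allI)
      fix x n assume x: "x \<in> carrier Hig"
      define y where "y = inv\<^bsub>Hig\<^esub> z \<otimes>\<^bsub>Hig\<^esub> x"
      have y: "y \<in> carrier Hig" using x zc by (simp add: y_def)
      have hy: "hc (inv_word (w0 z)) = inv\<^bsub>Hig\<^esub> z" using hc_w0 Hig_inv by metis
      have zy: "z \<otimes>\<^bsub>Hig\<^esub> y = x" using x zc by (simp add: y_def H.m_assoc[symmetric])
      have b: "beta z x = beta z y + 1" using beta_shift[OF y] zy by simp
      have "rho z r (x, n) = rho z (map_word Inl (w0 z)) (rho z (map_word Inr (inv_word (w0 z))) (x, n))"
        using Z by (simp add: rho_append)
      also have "\<dots> = rho z (map_word Inl (w0 z)) (y, n + beta z x - beta z y)"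
        using x by (simp add: rho_Inr hy y_def)
      also have "\<dots> = (x, n + 1)" using y by (simp add: rho_Inl hc_w0 zy b)
      finally show "rho z r (x, n) = Tsh 1 (x, n)" by (simp add: Tsh_def)
    qed
  qed
qed

lemma rho_pres: "pres_eq (amalg_rels z) u v \<Longrightarrow>
   \<exists>j. \<forall>x\<in>carrier Hig. \<forall>n. rho z u (x, n) = Tsh j (rho z v (x, n))"
proof (induction rule: pres_eq.induct)
  case (refl w) then show ?case by (auto intro!: exI[of _ 0])
next
  case (sym u v)
  then obtain j where j: "\<forall>x\<in>carrier Hig. \<forall>n. rho z u (x, n) = Tsh j (rho z v (x, n))" by blast
  show ?case
  proof (intro exI ballI allI)
    fix x n assume "x \<in> carrier Hig"
    then show "rho z v (x, n) = Tsh (- j) (rho z u (x, n))" using j by simp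
  qed
next
  case (trans u v w)
  then obtain j k where j: "\<forall>x\<in>carrier Hig. \<forall>n. rho z u (x, n) = Tsh j (rho z v (x, n))"
     and k: "\<forall>x\<in>carrier Hig. \<forall>n. rho z v (x, n) = Tsh k (rho z w (x, n))" by blast
  show ?case
  proof (intro exI ballI allI)
    fix x n assume "x \<in> carrier Hig"
    then show "rho z u (x, n) = Tsh (j + k) (rho z w (x, n))" using j k by simp
  qed
next
  case (cancel u a b v)
  show ?case
  proof (intro exI ballI allI)
    fix x n assume x: "x \<in> carrier Hig"
    obtain y m where ym: "rho z v (x, n) = (y, m)" "y \<in> carrier Hig" using rho_pair[OF x] by blast
    have "act z (a, b) (act z (a, \<not> b) (y, m)) = (y, m)" using act_cancel[OF ym(2)] by simp
    then show "rho z (u @ [(a, b), (a, \<not> b)] @ v) (x, n) = Tsh 0 (rho z (u @ v) (x, n))"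
      using ym by (simp add: rho_append)
  qed
next
  case (relator r u v)
  obtain j where j: "\<forall>x\<in>carrier Hig. \<forall>n. rho z r (x, n) = Tsh j (x, n)"
    using rho_relator[OF relator] by blast
  show ?case
  proof (intro exI ballI allI)
    fix x n assume x: "x \<in> carrier Hig"
    obtain y m where ym: "rho z v (x, n) = (y, m)" "y \<in> carrier Hig" using rho_pair[OF x] by blast
    have "rho z (u @ r @ v) (x, n) = rho z u (rho z r (y, m))" using ym by (simp add: rho_append)
    also have "\<dots> = rho z u (Tsh j (y, m))" using j ym by simp
    also have "\<dots> = Tsh j (rho z u (y, m))" using rho_Tsh ym by simp
    finally show "rho z (u @ r @ v) (x, n) = Tsh j (rho z (u @ v) (x, n))" using ym by (simp add: rho_append)
  qed
qed

end


lemma perfect_word: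
  fixes L :: "hgen word \<Rightarrow> int"
  assumes add: "\<And>u v. L (u @ v) = L u + L v"
    and inv: "\<And>u v. pres_eq hig_rels u v \<Longrightarrow> L u = L v"
  shows "L w = 0"
proof -
  have L0: "L [] = 0" using add[of "[]" "[]"] by simp
  have pair: "L [(x,b)] + L [(x,\<not> b)] = 0" for x b
  proof -
    have "pres_eq hig_rels ([] @ [(x,b),(x,\<not> b)] @ []) ([] @ [])" by (rule pres_eq.cancel)
    then have "L [(x,b),(x,\<not> b)] = 0" using inv L0 by fastforce
    then show ?thesis using add[of "[(x,b)]" "[(x,\<not> b)]"] by simp
  qed
  have rel: "L [(y,False)] = 0" if "hig_relator x y \<in> hig_rels" for x y
  proof -
    have "pres_eq hig_rels ([] @ hig_relator x y @ []) ([] @ [])" by (rule pres_eq.relator[OF that])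
    then have "L (hig_relator x y) = 0" using inv L0 by fastforce
    moreover have "L (hig_relator x y) = L [(x,False)] + L [(y,True)] + L [(x,True)] + L [(y,False)] + L [(y,False)]"
      proof -
      have "hig_relator x y = [(x,False)] @ [(y,True)] @ [(x,True)] @ [(y,False)] @ [(y,False)]"
        by (simp add: hig_relator_def)
      then show ?thesis by (simp only: add add.assoc)
    qed
    moreover have "L [(x,False)] + L [(x,True)] = 0" "L [(y,False)] + L [(y,True)] = 0"
      using pair[of x False] pair[of y False] by simp_all
    ultimately show ?thesis by linarith
  qed
  have gF: "L [(y,False)] = 0" for y
  proof (cases y)
    case Ga then show ?thesis using rel[of Gd Ga] by (simp add: hig_rels_def)
  next
    case Gb then show ?thesis using rel[of Ga Gb] by (simp add: hig_rels_def)
  next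
    case Gc then show ?thesis using rel[of Gb Gc] by (simp add: hig_rels_def)
  next
    case Gd then show ?thesis using rel[of Gc Gd] by (simp add: hig_rels_def)
  qed
  have g: "L [(y,b)] = 0" for y b
    using gF[of y] pair[of y False] by (cases b) auto
  show ?thesis
  proof (induction w)
    case Nil then show ?case by (rule L0)
  next
    case (Cons l w)
    obtain y b where "l = (y,b)" by force
    then show ?case using Cons add[of "[l]" w] g by simp
  qed
qed

lemma pres_eq_map:
  assumes "\<And>r. r \<in> R \<Longrightarrow> map_word f r \<in> R'"
  shows "pres_eq R u v \<Longrightarrow> pres_eq R' (map_word f u) (map_word f v)"
proof (induction rule: pres_eq.induct)
  case (refl w) then show ?case by (rule pres_eq.refl)
next
  case (sym u v) then show ?case by (blast intro: pres_eq.sym)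
next
  case (trans u v w) then show ?case by (blast intro: pres_eq.trans)
next
  case (cancel u x b v)
  have "pres_eq R' (map_word f u @ [(f x,b),(f x,\<not> b)] @ map_word f v) (map_word f u @ map_word f v)"
    by (rule pres_eq.cancel)
  then show ?case by (simp add: map_word_append)
next
  case (relator r u v)
  have "pres_eq R' (map_word f u @ map_word f r @ map_word f v) (map_word f u @ map_word f v)"
    by (rule pres_eq.relator[OF assms[OF relator]])
  then show ?case by (simp add: map_word_append)
qed

abbreviation kc :: "hgen word set \<Rightarrow> (hgen + hgen) word \<Rightarrow> (hgen + hgen) word set" where
  "kc z \<equiv> cls (amalg_rels z)"

definition repK :: "(hgen + hgen) word set \<Rightarrow> (hgen + hgen) word" where
  "repK g = (SOME w. w \<in> g)"

definition p0 :: "hgen word set \<times> int" where "p0 = (\<one>\<^bsub>Hig\<^esub>, 0)"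

definition J :: "hgen word set \<Rightarrow> (hgen + hgen) word \<Rightarrow> int" where
  "J z u = (THE j. rho z u p0 = Tsh j (rho z (repK (kc z u)) p0))"

definition cc :: "hgen word set \<Rightarrow> (hgen + hgen) word set \<Rightarrow> (hgen + hgen) word set \<Rightarrow> int" where
  "cc z g h = J z (repK g @ repK h)"

lemma K_carrier: "carrier (Kam z) = range (kc z)" by (simp add: Kam_def pres_carrier)
lemma K_mult: "kc z a \<otimes>\<^bsub>Kam z\<^esub> kc z b = kc z (a @ b)" by (simp add: Kam_def pres_mult)
lemma K_one: "\<one>\<^bsub>Kam z\<^esub> = kc z []" by (simp add: Kam_def pres_one)
lemma K_inv: "inv\<^bsub>Kam z\<^esub> (kc z w) = kc z (inv_word w)" by (simp add: Kam_def pres_inv)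
lemma group_K: "group (Kam z)" by (simp add: Kam_def group_pres)

lemma repK_mem: "repK (cls R u) \<in> cls R u"
  unfolding repK_def by (rule someI[of _ u]) (rule cls_mem)

lemma kc_repK: "cls R (repK (cls R u)) = cls R u"
  using mem_cls[OF repK_mem] .

lemma pres_repK: "pres_eq R u (repK (cls R u))"
  using kc_repK[of R u] by (simp add: cls_eq_iff pres_eq.sym)

lemma kc_repK_carrier: "g \<in> carrier (Kam z) \<Longrightarrow> kc z (repK g) = g"
  by (auto simp: K_carrier kc_repK)

context zctx begin

lemma J_spec: "\<forall>x\<in>carrier Hig. \<forall>n. rho z u (x, n) = Tsh (J z u) (rho z (repK (kc z u)) (x, n))"
proof -
  obtain j where j: "\<forall>x\<in>carrier Hig. \<forall>n. rho z u (x, n) = Tsh j (rho z (repK (kc z u)) (x, n))"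
    using rho_pres[OF pres_repK] by blast
  have "J z u = j" unfolding J_def
  proof (rule the_equality)
    show "rho z u p0 = Tsh j (rho z (repK (kc z u)) p0)" using j by (simp add: p0_def)
  next
    fix i assume "rho z u p0 = Tsh i (rho z (repK (kc z u)) p0)"
    then have "Tsh i (rho z (repK (kc z u)) p0) = Tsh j (rho z (repK (kc z u)) p0)"
      using j by (simp add: p0_def)
    then show "i = j" by (simp add: Tsh_def)
  qed
  then show ?thesis using j by simp
qed

lemma J_char:
  assumes "\<forall>x\<in>carrier Hig. \<forall>n. rho z u (x, n) = Tsh j (rho z (repK (kc z u)) (x, n))"
  shows "J z u = j"
proof -
  have "Tsh (J z u) (rho z (repK (kc z u)) p0) = Tsh j (rho z (repK (kc z u)) p0)"
    using assms J_spec[of u] by (simp add: p0_def)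
  then show ?thesis by (simp add: Tsh_def)
qed

lemma J_app: "J z (u @ v) = J z u + J z v + cc z (kc z u) (kc z v)"
proof (rule J_char, intro ballI allI)
  fix x n assume x: "x \<in> carrier Hig"
  let ?a = "repK (kc z u)" and ?b = "repK (kc z v)"
  obtain y m where ym: "rho z ?b (x, n) = (y, m)" "y \<in> carrier Hig" using rho_pair[OF x] by blast
  have e: "kc z (?a @ ?b) = kc z (u @ v)"
    by (simp only: K_mult[symmetric] kc_repK)
  have "rho z (u @ v) (x, n) = rho z u (rho z v (x, n))" by (simp add: rho_append)
  also have "\<dots> = rho z u (Tsh (J z v) (y, m))" using J_spec[of v] x ym by simp
  also have "\<dots> = Tsh (J z v) (rho z u (y, m))" using rho_Tsh ym by simp
  also have "\<dots> = Tsh (J z v + J z u) (rho z ?a (y, m))" using J_spec[of u] ym by simp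
  also have "\<dots> = Tsh (J z v + J z u) (rho z (?a @ ?b) (x, n))" using ym by (simp add: rho_append)
  also have "\<dots> = Tsh (J z v + J z u + J z (?a @ ?b)) (rho z (repK (kc z (?a @ ?b))) (x, n))"
    using J_spec[of "?a @ ?b"] x by simp
  finally show "rho z (u @ v) (x, n) = Tsh (J z u + J z v + cc z (kc z u) (kc z v)) (rho z (repK (kc z (u @ v))) (x, n))"
    by (simp add: e cc_def add.commute)
qed

lemma J_repK: "J z (repK (kc z u)) = 0"
  by (rule J_char) (simp add: kc_repK)

lemma cc_cocycle: "cocycle2 (Kam z) (cc z)"
  unfolding cocycle2_def
proof (intro ballI)
  fix g h k assume g: "g \<in> carrier (Kam z)" and h: "h \<in> carrier (Kam z)" and k: "k \<in> carrier (Kam z)"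
  obtain a b c where abc: "g = kc z a" "h = kc z b" "k = kc z c" using g h k by (auto simp: K_carrier)
  let ?u = "repK g" and ?v = "repK h" and ?w = "repK k"
  have ku: "kc z ?u = g" "kc z ?v = h" "kc z ?w = k" using abc by (simp_all add: kc_repK)
  have J0: "J z ?u = 0" "J z ?v = 0" "J z ?w = 0" using abc J_repK by auto
  have c1: "J z (?u @ ?v) = cc z g h" by (simp add: cc_def)
  have c2: "J z (?v @ ?w) = cc z h k" by (simp add: cc_def)
  have "J z ((?u @ ?v) @ ?w) = J z (?u @ ?v) + J z ?w + cc z (kc z (?u @ ?v)) (kc z ?w)" by (rule J_app)
  moreover have "J z (?u @ (?v @ ?w)) = J z ?u + J z (?v @ ?w) + cc z (kc z ?u) (kc z (?v @ ?w))" by (rule J_app)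
  moreover have "kc z (?u @ ?v) = g \<otimes>\<^bsub>Kam z\<^esub> h" "kc z (?v @ ?w) = h \<otimes>\<^bsub>Kam z\<^esub> k"
    using ku by (simp_all only: K_mult[symmetric])
  ultimately show "cc z g h + cc z (g \<otimes>\<^bsub>Kam z\<^esub> h) k = cc z h k + cc z g (h \<otimes>\<^bsub>Kam z\<^esub> k)"
    using J0 c1 c2 ku by simp
qed

end


context zctx begin

interpretation K: group "Kam z" by (rule group_K)

lemma Inl_rel: "r \<in> hig_rels \<Longrightarrow> map_word Inl r \<in> amalg_rels z" by (simp add: amalg_rels_eq)
lemma Inr_rel: "r \<in> hig_rels \<Longrightarrow> map_word Inr r \<in> amalg_rels z" by (simp add: amalg_rels_eq)

lemma kc_carrier[simp]: "kc z w \<in> carrier (Kam z)" by (simp add: K_carrier)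

lemma J_Inl_inv: assumes "pres_eq hig_rels u v"
  shows "J z (map_word Inl u) = J z (map_word Inl v)" "kc z (map_word Inl u) = kc z (map_word Inl v)"
proof -
  have k: "kc z (map_word Inl u) = kc z (map_word Inl v)"
    using pres_eq_map[of hig_rels Inl "amalg_rels z", OF Inl_rel assms] by (simp add: cls_eq_iff)
  then show "kc z (map_word Inl u) = kc z (map_word Inl v)" .
  have h: "hc u = hc v" using assms by (simp add: cls_eq_iff)
  show "J z (map_word Inl u) = J z (map_word Inl v)"
  proof (rule J_char, intro ballI allI)
    fix x n assume x: "x \<in> carrier Hig"
    have "rho z (map_word Inl u) (x, n) = rho z (map_word Inl v) (x, n)" using x h by (simp add: rho_Inl)
    also have "\<dots> = Tsh (J z (map_word Inl v)) (rho z (repK (kc z (map_word Inl v))) (x, n))"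
      using J_spec[of "map_word Inl v"] x by blast
    finally show "rho z (map_word Inl u) (x, n) = Tsh (J z (map_word Inl v)) (rho z (repK (kc z (map_word Inl u))) (x, n))"
      using k by simp
  qed
qed

lemma J_Inr_inv: assumes "pres_eq hig_rels u v"
  shows "J z (map_word Inr u) = J z (map_word Inr v)" "kc z (map_word Inr u) = kc z (map_word Inr v)"
proof -
  have k: "kc z (map_word Inr u) = kc z (map_word Inr v)"
    using pres_eq_map[of hig_rels Inr "amalg_rels z", OF Inr_rel assms] by (simp add: cls_eq_iff)
  then show "kc z (map_word Inr u) = kc z (map_word Inr v)" .
  have h: "hc u = hc v" using assms by (simp add: cls_eq_iff)
  show "J z (map_word Inr u) = J z (map_word Inr v)"
  proof (rule J_char, intro ballI allI)
    fix x n assume x: "x \<in> carrier Hig"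
    have "rho z (map_word Inr u) (x, n) = rho z (map_word Inr v) (x, n)" using x h by (simp add: rho_Inr)
    also have "\<dots> = Tsh (J z (map_word Inr v)) (rho z (repK (kc z (map_word Inr v))) (x, n))"
      using J_spec[of "map_word Inr v"] x by blast
    finally show "rho z (map_word Inr u) (x, n) = Tsh (J z (map_word Inr v)) (rho z (repK (kc z (map_word Inr u))) (x, n))"
      using k by simp
  qed
qed

lemma kc_w0: "kc z (map_word Inl (w0 z)) = kc z (map_word Inr (w0 z))"
proof -
  let ?a = "kc z (map_word Inl (w0 z))" and ?b = "kc z (map_word Inr (w0 z))"
  have "kc z (map_word Inl (w0 z) @ map_word Inr (inv_word (w0 z))) = kc z []"
    by (rule pres_relator) (simp add: amalg_rels_eq)
  then have "?a \<otimes>\<^bsub>Kam z\<^esub> inv\<^bsub>Kam z\<^esub> ?b = \<one>\<^bsub>Kam z\<^esub>"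
    by (simp add: K_inv inv_map_word K_mult K_one)
  then have "?a \<otimes>\<^bsub>Kam z\<^esub> inv\<^bsub>Kam z\<^esub> ?b \<otimes>\<^bsub>Kam z\<^esub> ?b = ?b" by simp
  then show ?thesis by (simp add: K.m_assoc)
qed

lemma J_w0: "J z (map_word Inl (w0 z)) = 1 + J z (map_word Inr (w0 z))"
proof (rule J_char, intro ballI allI)
  fix x n assume x: "x \<in> carrier Hig"
  have b: "beta z (z \<otimes>\<^bsub>Hig\<^esub> x) = beta z x + 1" by (rule beta_shift[OF x])
  have "rho z (map_word Inl (w0 z)) (x, n) = Tsh 1 (rho z (map_word Inr (w0 z)) (x, n))"
    using x b by (simp add: rho_Inl rho_Inr hc_w0 Tsh_def)
  also have "\<dots> = Tsh 1 (Tsh (J z (map_word Inr (w0 z))) (rho z (repK (kc z (map_word Inr (w0 z)))) (x, n)))"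
    using J_spec[of "map_word Inr (w0 z)"] x by simp
  finally show "rho z (map_word Inl (w0 z)) (x, n) = Tsh (1 + J z (map_word Inr (w0 z))) (rho z (repK (kc z (map_word Inl (w0 z)))) (x, n))"
    by (simp add: kc_w0)
qed

theorem nontorsion:
  assumes gen: "H2_generator (Kam z) f" and k: "k \<noteq> 0"
  shows "\<not> coboundary2 (Kam z) (\<lambda>g h. k * f g h)"
proof
  assume "coboundary2 (Kam z) (\<lambda>g h. k * f g h)"
  then obtain \<phi>2 where p2: "\<forall>g\<in>carrier (Kam z). \<forall>h\<in>carrier (Kam z). k * f g h = \<phi>2 g + \<phi>2 h - \<phi>2 (g \<otimes>\<^bsub>Kam z\<^esub> h)"
    by (auto simp: coboundary2_def)
  obtain n where "coboundary2 (Kam z) (\<lambda>g h. cc z g h - n * f g h)"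
    using gen cc_cocycle by (auto simp: H2_generator_def)
  then obtain \<phi>1 where p1: "\<forall>g\<in>carrier (Kam z). \<forall>h\<in>carrier (Kam z). cc z g h - n * f g h = \<phi>1 g + \<phi>1 h - \<phi>1 (g \<otimes>\<^bsub>Kam z\<^esub> h)"
    by (auto simp: coboundary2_def)
  define \<psi> where "\<psi> g = k * \<phi>1 g + n * \<phi>2 g" for g
  have cob: "k * cc z g h = \<psi> g + \<psi> h - \<psi> (g \<otimes>\<^bsub>Kam z\<^esub> h)" if "g \<in> carrier (Kam z)" "h \<in> carrier (Kam z)" for g h
  proof -
    have "k * cc z g h = k * (cc z g h - n * f g h) + n * (k * f g h)" by (simp add: algebra_simps)
    also have "\<dots> = \<psi> g + \<psi> h - \<psi> (g \<otimes>\<^bsub>Kam z\<^esub> h)"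
    proof -
      have a: "cc z g h - n * f g h = \<phi>1 g + \<phi>1 h - \<phi>1 (g \<otimes>\<^bsub>Kam z\<^esub> h)" using p1 that by blast
      have b: "k * f g h = \<phi>2 g + \<phi>2 h - \<phi>2 (g \<otimes>\<^bsub>Kam z\<^esub> h)" using p2 that by blast
      show ?thesis unfolding a b \<psi>_def by (simp add: algebra_simps)
    qed
    finally show ?thesis .
  qed
  define L1 where "L1 w = k * J z (map_word Inl w) + \<psi> (kc z (map_word Inl w))" for w
  define L2 where "L2 w = k * J z (map_word Inr w) + \<psi> (kc z (map_word Inr w))" for w
  have "L1 w = 0" for w
  proof (rule perfect_word)
    fix u v
    have "k * cc z (kc z (map_word Inl u)) (kc z (map_word Inl v)) = \<psi> (kc z (map_word Inl u)) + \<psi> (kc z (map_word Inl v)) - \<psi> (kc z (map_word Inl (u @ v)))"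
      using cob[of "kc z (map_word Inl u)" "kc z (map_word Inl v)"] by (simp add: K_mult map_word_append)
    then show "L1 (u @ v) = L1 u + L1 v"
      by (simp add: L1_def map_word_append J_app algebra_simps)
  next
    fix u v assume "pres_eq hig_rels u v"
    then show "L1 u = L1 v" using J_Inl_inv by (simp add: L1_def)
  qed
  moreover have "L2 w = 0" for w
  proof (rule perfect_word)
    fix u v
    have "k * cc z (kc z (map_word Inr u)) (kc z (map_word Inr v)) = \<psi> (kc z (map_word Inr u)) + \<psi> (kc z (map_word Inr v)) - \<psi> (kc z (map_word Inr (u @ v)))"
      using cob[of "kc z (map_word Inr u)" "kc z (map_word Inr v)"] by (simp add: K_mult map_word_append)
    then show "L2 (u @ v) = L2 u + L2 v"
      by (simp add: L2_def map_word_append J_app algebra_simps)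
  next
    fix u v assume "pres_eq hig_rels u v"
    then show "L2 u = L2 v" using J_Inr_inv by (simp add: L2_def)
  qed
  ultimately have "L1 (w0 z) - L2 (w0 z) = 0" by simp
  then have "k * (1 + J z (map_word Inr (w0 z))) - k * J z (map_word Inr (w0 z)) = 0"
    by (simp add: L1_def L2_def J_w0 kc_w0)
  then have "k = 0" by (simp add: algebra_simps)
  with k show False by simp
qed

end


lemma ext_carrier[simp]: "carrier (ext_group K f) = UNIV \<times> carrier K" by (simp add: ext_group_def)
lemma ext_mult[simp]: "(m, g) \<otimes>\<^bsub>ext_group K f\<^esub> (n, h) = (m + n + f g h, g \<otimes>\<^bsub>K\<^esub> h)"
  by (simp add: ext_group_def)
lemma ext_one[simp]: "\<one>\<^bsub>ext_group K f\<^esub> = (- f \<one>\<^bsub>K\<^esub> \<one>\<^bsub>K\<^esub>, \<one>\<^bsub>K\<^esub>)"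
  by (simp add: ext_group_def)

lemma cocycle_1l: assumes "group K" "cocycle2 K f" "k \<in> carrier K"
  shows "f \<one>\<^bsub>K\<^esub> k = f \<one>\<^bsub>K\<^esub> \<one>\<^bsub>K\<^esub>"
proof -
  interpret K: group K by fact
  have "f \<one>\<^bsub>K\<^esub> \<one>\<^bsub>K\<^esub> + f (\<one>\<^bsub>K\<^esub> \<otimes>\<^bsub>K\<^esub> \<one>\<^bsub>K\<^esub>) k = f \<one>\<^bsub>K\<^esub> k + f \<one>\<^bsub>K\<^esub> (\<one>\<^bsub>K\<^esub> \<otimes>\<^bsub>K\<^esub> k)"
    using assms(2,3) unfolding cocycle2_def by blast
  then show ?thesis using assms(3) by simp
qed

lemma cocycle_1r: assumes "group K" "cocycle2 K f" "g \<in> carrier K"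
  shows "f g \<one>\<^bsub>K\<^esub> = f \<one>\<^bsub>K\<^esub> \<one>\<^bsub>K\<^esub>"
proof -
  interpret K: group K by fact
  have "f g \<one>\<^bsub>K\<^esub> + f (g \<otimes>\<^bsub>K\<^esub> \<one>\<^bsub>K\<^esub>) \<one>\<^bsub>K\<^esub> = f \<one>\<^bsub>K\<^esub> \<one>\<^bsub>K\<^esub> + f g (\<one>\<^bsub>K\<^esub> \<otimes>\<^bsub>K\<^esub> \<one>\<^bsub>K\<^esub>)"
    using assms(2,3) unfolding cocycle2_def by blast
  then show ?thesis using assms(3) by simp
qed

lemma group_ext: assumes "group K" "cocycle2 K f" shows "group (ext_group K f)"
proof -
  interpret K: group K by fact
  show ?thesis
  proof (rule groupI)
    fix x y assume "x \<in> carrier (ext_group K f)" "y \<in> carrier (ext_group K f)"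
    then show "x \<otimes>\<^bsub>ext_group K f\<^esub> y \<in> carrier (ext_group K f)"
      by (cases x, cases y) auto
  next
    show "\<one>\<^bsub>ext_group K f\<^esub> \<in> carrier (ext_group K f)" by simp
  next
    fix x y w assume "x \<in> carrier (ext_group K f)" "y \<in> carrier (ext_group K f)" "w \<in> carrier (ext_group K f)"
    moreover obtain a g b h c k where "x = (a,g)" "y = (b,h)" "w = (c,k)" by (cases x, cases y, cases w) auto
    moreover have "g \<in> carrier K \<Longrightarrow> h \<in> carrier K \<Longrightarrow> k \<in> carrier K \<Longrightarrow>
        f g h + f (g \<otimes>\<^bsub>K\<^esub> h) k = f h k + f g (h \<otimes>\<^bsub>K\<^esub> k)"
      using assms(2) unfolding cocycle2_def by blast
    ultimately show "x \<otimes>\<^bsub>ext_group K f\<^esub> y \<otimes>\<^bsub>ext_group K f\<^esub> w = x \<otimes>\<^bsub>ext_group K f\<^esub> (y \<otimes>\<^bsub>ext_group K f\<^esub> w)"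
      by (simp add: K.m_assoc algebra_simps)
  next
    fix x assume "x \<in> carrier (ext_group K f)"
    moreover obtain a g where "x = (a,g)" by (cases x) auto
    moreover have "g \<in> carrier K \<Longrightarrow> f \<one>\<^bsub>K\<^esub> g = f \<one>\<^bsub>K\<^esub> \<one>\<^bsub>K\<^esub>" using cocycle_1l[OF assms] by blast
    ultimately show "\<one>\<^bsub>ext_group K f\<^esub> \<otimes>\<^bsub>ext_group K f\<^esub> x = x"
      by simp
  next
    fix x assume "x \<in> carrier (ext_group K f)"
    moreover obtain a g where x: "x = (a,g)" by (cases x) auto
    ultimately have g: "g \<in> carrier K" by simp
    show "\<exists>y\<in>carrier (ext_group K f). y \<otimes>\<^bsub>ext_group K f\<^esub> x = \<one>\<^bsub>ext_group K f\<^esub>"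
    proof (rule bexI[of _ "(- f \<one>\<^bsub>K\<^esub> \<one>\<^bsub>K\<^esub> - a - f (inv\<^bsub>K\<^esub> g) g, inv\<^bsub>K\<^esub> g)"])
      show "(- f \<one>\<^bsub>K\<^esub> \<one>\<^bsub>K\<^esub> - a - f (inv\<^bsub>K\<^esub> g) g, inv\<^bsub>K\<^esub> g) \<in> carrier (ext_group K f)"
        using g by simp
      have "inv\<^bsub>K\<^esub> g \<otimes>\<^bsub>K\<^esub> g = \<one>\<^bsub>K\<^esub>" using g by simp
      then show "(- f \<one>\<^bsub>K\<^esub> \<one>\<^bsub>K\<^esub> - a - f (inv\<^bsub>K\<^esub> g) g, inv\<^bsub>K\<^esub> g) \<otimes>\<^bsub>ext_group K f\<^esub> x = \<one>\<^bsub>ext_group K f\<^esub>"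
        using x by simp
    qed
  qed
qed

lemma ext_central_mult: "ext_central K f a \<otimes>\<^bsub>ext_group K f\<^esub> ext_central K f b = ext_central K f (a + b)"
  if "group K" "cocycle2 K f"
proof -
  have "f \<one>\<^bsub>K\<^esub> \<one>\<^bsub>K\<^esub> = f \<one>\<^bsub>K\<^esub> \<one>\<^bsub>K\<^esub>" by simp
  then show ?thesis using group.is_monoid[OF that(1)] by (simp add: ext_central_def)
qed

lemma ext_central_comm:
  assumes "group K" "cocycle2 K f" "x \<in> carrier (ext_group K f)"
  shows "ext_central K f a \<otimes>\<^bsub>ext_group K f\<^esub> x = x \<otimes>\<^bsub>ext_group K f\<^esub> ext_central K f a"
    "ext_central K f a \<otimes>\<^bsub>ext_group K f\<^esub> x = (a + fst x, snd x)"
proof -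
  interpret K: group K by fact
  obtain m g where x: "x = (m,g)" "g \<in> carrier K" using assms(3) by (cases x) auto
  show "ext_central K f a \<otimes>\<^bsub>ext_group K f\<^esub> x = x \<otimes>\<^bsub>ext_group K f\<^esub> ext_central K f a"
    "ext_central K f a \<otimes>\<^bsub>ext_group K f\<^esub> x = (a + fst x, snd x)"
    using x cocycle_1l[OF assms(1,2) x(2)] cocycle_1r[OF assms(1,2) x(2)] by (simp_all add: ext_central_def)
qed

lemma ext_central_0: "ext_central K f 0 = \<one>\<^bsub>ext_group K f\<^esub>" by (simp add: ext_central_def)

lemma ext_central_carrier[simp]: "group K \<Longrightarrow> ext_central K f a \<in> carrier (ext_group K f)"
  by (simp add: ext_central_def group.is_monoid)

lemma ext_central_inv: assumes "group K" "cocycle2 K f"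
  shows "inv\<^bsub>ext_group K f\<^esub> (ext_central K f a) = ext_central K f (- a)"
proof -
  interpret E: group "ext_group K f" by (rule group_ext[OF assms])
  show ?thesis
    by (rule E.inv_equality) (simp_all add: ext_central_mult[OF assms] ext_central_0, simp_all add: ext_central_def group.is_monoid[OF assms(1)])
qed



lemma key_L:
  assumes grp: "group K" and gen: "H2_generator K f"
    and NT: "\<forall>k::int. k \<noteq> 0 \<longrightarrow> \<not> coboundary2 K (\<lambda>g h. k * f g h)"
    and S: "subgroup S (ext_group K f)" and surj: "\<forall>g\<in>carrier K. \<exists>s\<in>S. snd s = g"
  shows "ext_central K f 1 \<in> S"
proof -
  interpret K: group K by (rule grp)
  have coc: "cocycle2 K f" using gen by (simp add: H2_generator_def)
  have fc: "f g h + f (g \<otimes>\<^bsub>K\<^esub> h) k = f h k + f g (h \<otimes>\<^bsub>K\<^esub> k)"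
    if "g \<in> carrier K" "h \<in> carrier K" "k \<in> carrier K" for g h k
    using coc that unfolding cocycle2_def by blast
  interpret E: group "ext_group K f" by (rule group_ext[OF grp coc])
  interpret S: subgroup S "ext_group K f" by (rule S)
  define I where "I = {n. ext_central K f n \<in> S}"
  have I0: "0 \<in> I" using S.one_closed by (simp add: I_def ext_central_0 del: ext_one)
  have Iadd: "a + b \<in> I" if "a \<in> I" "b \<in> I" for a b
    using that S.m_closed[of "ext_central K f a" "ext_central K f b"]
    by (simp add: I_def ext_central_mult[OF grp coc])
  have Ineg: "- a \<in> I" if "a \<in> I" for a
    using that S.m_inv_closed[of "ext_central K f a"] by (simp add: I_def ext_central_inv[OF grp coc])
  have Inat: "int j * a \<in> I" if "a \<in> I" for a j
  proof (induction j)
    case 0 then show ?case using I0 by simp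
  next
    case (Suc j) then show ?case using Iadd[OF Suc that] by (simp add: algebra_simps)
  qed
  have Imul: "j * a \<in> I" if "a \<in> I" for a j
  proof (cases "j \<ge> 0")
    case True then show ?thesis using Inat[OF that, of "nat j"] by simp
  next
    case False then show ?thesis using Ineg[OF Inat[OF that, of "nat (- j)"]] by simp
  qed
  define \<phi> where "\<phi> g = fst (SOME s. s \<in> S \<and> snd s = g)" for g
  have phiS: "(\<phi> g, g) \<in> S" if "g \<in> carrier K" for g
  proof -
    have "\<exists>s. s \<in> S \<and> snd s = g" using surj that by blast
    then have "(SOME s. s \<in> S \<and> snd s = g) \<in> S \<and> snd (SOME s. s \<in> S \<and> snd s = g) = g" by (rule someI_ex)
    then show ?thesis unfolding \<phi>_def by (metis prod.collapse)
  qed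
  define D where "D g h = \<phi> g + \<phi> h + f g h - \<phi> (g \<otimes>\<^bsub>K\<^esub> h)" for g h
  have DI: "D g h \<in> I" if g: "g \<in> carrier K" and h: "h \<in> carrier K" for g h
  proof -
    let ?x = "(\<phi> g, g) \<otimes>\<^bsub>ext_group K f\<^esub> (\<phi> h, h)" and ?y = "(\<phi> (g \<otimes>\<^bsub>K\<^esub> h), g \<otimes>\<^bsub>K\<^esub> h)"
    have xS: "?x \<in> S" using phiS g h by (intro S.m_closed) auto
    have yS: "?y \<in> S" using phiS g h by simp
    have "ext_central K f (D g h) \<otimes>\<^bsub>ext_group K f\<^esub> ?y = (D g h + \<phi> (g \<otimes>\<^bsub>K\<^esub> h), g \<otimes>\<^bsub>K\<^esub> h)"
      using ext_central_comm(2)[OF grp coc, of ?y "D g h"] g h by simp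
    also have "\<dots> = ?x" by (simp add: D_def)
    finally have e: "?x = ext_central K f (D g h) \<otimes>\<^bsub>ext_group K f\<^esub> ?y" by simp
    have "ext_central K f (D g h) = ?x \<otimes>\<^bsub>ext_group K f\<^esub> inv\<^bsub>ext_group K f\<^esub> ?y"
      using E.inv_solve_right[OF ext_central_carrier[OF grp] S.mem_carrier[OF xS] S.mem_carrier[OF yS]] e by simp
    also have "\<dots> \<in> S" using xS yS by simp
    finally show ?thesis by (simp add: I_def)
  qed
  show ?thesis
  proof (cases "\<exists>a\<in>I. a \<noteq> 0")
    case False
    then have D0: "D g h = 0" if "g \<in> carrier K" "h \<in> carrier K" for g h using DI[OF that] by blast
    have "coboundary2 K (\<lambda>g h. 1 * f g h)"
      unfolding coboundary2_def
    proof (rule exI[of _ "\<lambda>g. - \<phi> g"], intro ballI)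
      fix g h assume "g \<in> carrier K" "h \<in> carrier K"
      then have "\<phi> g + \<phi> h + f g h - \<phi> (g \<otimes>\<^bsub>K\<^esub> h) = 0" using D0 unfolding D_def by blast
      then show "1 * f g h = - \<phi> g + - \<phi> h - - \<phi> (g \<otimes>\<^bsub>K\<^esub> h)" by linarith
    qed
    with NT have False by (metis zero_neq_one)
    then show ?thesis ..
  next
    case True
    then obtain a where a: "a \<in> I" "a \<noteq> 0" by blast
    have absI: "\<bar>a\<bar> \<in> I" using a Ineg by (cases "a \<ge> 0") auto
    define m0 where "m0 = (LEAST n::nat. n > 0 \<and> int n \<in> I)"
    have ex: "\<exists>n::nat. n > 0 \<and> int n \<in> I"
      using absI a by (intro exI[of _ "nat \<bar>a\<bar>"]) auto
    have m0: "m0 > 0 \<and> int m0 \<in> I" unfolding m0_def by (rule LeastI_ex[OF ex])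
    define m where "m = int m0"
    have mpos: "m > 0" and mI: "m \<in> I" using m0 by (auto simp: m_def)
    have mdvd: "m dvd b" if "b \<in> I" for b
    proof -
      have "b - (b div m) * m \<in> I" using Iadd[OF that Imul[OF mI, of "- (b div m)"]] by simp
      then have rI: "b mod m \<in> I" by (simp add: minus_div_mult_eq_mod)
      have r0: "0 \<le> b mod m" "b mod m < m" using mpos by auto
      show ?thesis
      proof (rule ccontr)
        assume "\<not> m dvd b"
        then have "b mod m > 0" using r0 by (simp add: dvd_eq_mod_eq_0 order_le_neq_trans)
        then have "nat (b mod m) > 0 \<and> int (nat (b mod m)) \<in> I" using rI by simp
        then have "m0 \<le> nat (b mod m)" unfolding m0_def by (rule Least_le)
        then show False using r0 by (simp add: m_def)
      qed
    qed
    define c' where "c' g h = D g h div m" for g h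
    have Dc: "D g h = m * c' g h" if "g \<in> carrier K" "h \<in> carrier K" for g h
      using mdvd[OF DI[OF that]] by (simp add: c'_def)
    have c'coc: "cocycle2 K c'"
      unfolding cocycle2_def
    proof (intro ballI)
      fix g h k assume g: "g \<in> carrier K" and h: "h \<in> carrier K" and k: "k \<in> carrier K"
      have "D g h + D (g \<otimes>\<^bsub>K\<^esub> h) k = D h k + D g (h \<otimes>\<^bsub>K\<^esub> k)"
        using fc[OF g h k] g h k by (simp add: D_def K.m_assoc)
      then have "m * (c' g h + c' (g \<otimes>\<^bsub>K\<^esub> h) k) = m * (c' h k + c' g (h \<otimes>\<^bsub>K\<^esub> k))"
        using Dc g h k by (simp add: distrib_left)
      then show "c' g h + c' (g \<otimes>\<^bsub>K\<^esub> h) k = c' h k + c' g (h \<otimes>\<^bsub>K\<^esub> k)"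
        using mpos by simp
    qed
    obtain n where "coboundary2 K (\<lambda>g h. c' g h - n * f g h)"
      using gen c'coc unfolding H2_generator_def by blast
    then obtain \<phi>3 where p3: "\<forall>g\<in>carrier K. \<forall>h\<in>carrier K. c' g h - n * f g h = \<phi>3 g + \<phi>3 h - \<phi>3 (g \<otimes>\<^bsub>K\<^esub> h)"
      unfolding coboundary2_def by blast
    have "coboundary2 K (\<lambda>g h. (1 - m * n) * f g h)"
      unfolding coboundary2_def
    proof (rule exI[of _ "\<lambda>g. - \<phi> g + m * \<phi>3 g"], intro ballI)
      fix g h assume g: "g \<in> carrier K" and h: "h \<in> carrier K"
      have e1: "c' g h - n * f g h = \<phi>3 g + \<phi>3 h - \<phi>3 (g \<otimes>\<^bsub>K\<^esub> h)" using p3 g h by blast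
      have e2: "D g h = m * c' g h" by (rule Dc[OF g h])
      have "(1 - m * n) * f g h = (f g h - D g h) + m * (c' g h - n * f g h)"
        using e2 by (simp add: algebra_simps)
      also have "\<dots> = (- \<phi> g + m * \<phi>3 g) + (- \<phi> h + m * \<phi>3 h) - (- \<phi> (g \<otimes>\<^bsub>K\<^esub> h) + m * \<phi>3 (g \<otimes>\<^bsub>K\<^esub> h))"
        unfolding e1 by (simp add: D_def algebra_simps)
      finally show "(1 - m * n) * f g h = (- \<phi> g + m * \<phi>3 g) + (- \<phi> h + m * \<phi>3 h) - (- \<phi> (g \<otimes>\<^bsub>K\<^esub> h) + m * \<phi>3 (g \<otimes>\<^bsub>K\<^esub> h))" .
    qed
    with NT have "1 - m * n = 0" by blast
    then have "m * n = 1" by simp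
    then have "m = 1" using mpos pos_zmult_eq_1_iff by blast
    with mI show ?thesis by (simp add: I_def)
  qed
qed



lemma gen_lemma:
  assumes A: "comm_group A" and K: "group K" and W: "subgroup W (A \<times>\<times> K)"
    and a: "a \<in> carrier K" and b: "b \<in> carrier K"
    and rel: "inv\<^bsub>K\<^esub> a \<otimes>\<^bsub>K\<^esub> b \<otimes>\<^bsub>K\<^esub> a = b \<otimes>\<^bsub>K\<^esub> b"
    and va: "(va, a) \<in> W" and vb: "(vb, b) \<in> W"
  shows "(\<one>\<^bsub>A\<^esub>, b) \<in> W"
proof -
  interpret A: comm_group A by (rule A)
  interpret K: group K by (rule K)
  interpret P: group "A \<times>\<times> K" by (rule DirProd_group[OF A.is_group K])
  interpret W: subgroup W "A \<times>\<times> K" by (rule W)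
  have vac: "va \<in> carrier A" and vbc: "vb \<in> carrier A" using W.subset va vb by auto
  have w1: "inv\<^bsub>A \<times>\<times> K\<^esub> (va, a) \<otimes>\<^bsub>A \<times>\<times> K\<^esub> (vb, b) \<otimes>\<^bsub>A \<times>\<times> K\<^esub> (va, a) \<in> W"
    using va vb by simp
  have e1: "inv\<^bsub>A \<times>\<times> K\<^esub> (va, a) \<otimes>\<^bsub>A \<times>\<times> K\<^esub> (vb, b) \<otimes>\<^bsub>A \<times>\<times> K\<^esub> (va, a) = (vb, b \<otimes>\<^bsub>K\<^esub> b)"
  proof -
    have "inv\<^bsub>A\<^esub> va \<otimes>\<^bsub>A\<^esub> vb \<otimes>\<^bsub>A\<^esub> va = vb"
      using vac vbc by (metis A.inv_closed A.m_ac(2) A.m_assoc A.r_inv A.r_one)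
    then show ?thesis
      using inv_DirProd[OF A.is_group K vac a] rel by simp
  qed
  have w2: "(vb, b) \<otimes>\<^bsub>A \<times>\<times> K\<^esub> (vb, b) \<in> W" using W.m_closed[OF vb vb] .
  have w3: "(vb, b) \<otimes>\<^bsub>A \<times>\<times> K\<^esub> ((vb, b \<otimes>\<^bsub>K\<^esub> b) \<otimes>\<^bsub>A \<times>\<times> K\<^esub> inv\<^bsub>A \<times>\<times> K\<^esub> ((vb, b) \<otimes>\<^bsub>A \<times>\<times> K\<^esub> (vb, b))) \<in> W"
    using w1 w2 vb unfolding e1 by simp
  have "(vb, b) \<otimes>\<^bsub>A \<times>\<times> K\<^esub> ((vb, b \<otimes>\<^bsub>K\<^esub> b) \<otimes>\<^bsub>A \<times>\<times> K\<^esub> inv\<^bsub>A \<times>\<times> K\<^esub> ((vb, b) \<otimes>\<^bsub>A \<times>\<times> K\<^esub> (vb, b)))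
      = (vb \<otimes>\<^bsub>A\<^esub> (vb \<otimes>\<^bsub>A\<^esub> inv\<^bsub>A\<^esub> (vb \<otimes>\<^bsub>A\<^esub> vb)), b \<otimes>\<^bsub>K\<^esub> ((b \<otimes>\<^bsub>K\<^esub> b) \<otimes>\<^bsub>K\<^esub> inv\<^bsub>K\<^esub> (b \<otimes>\<^bsub>K\<^esub> b)))"
    using inv_DirProd[OF A.is_group K, of "vb \<otimes>\<^bsub>A\<^esub> vb" "b \<otimes>\<^bsub>K\<^esub> b"] vbc b by simp
  also have "\<dots> = (\<one>\<^bsub>A\<^esub>, b)"
  proof -
    have "vb \<otimes>\<^bsub>A\<^esub> (vb \<otimes>\<^bsub>A\<^esub> inv\<^bsub>A\<^esub> (vb \<otimes>\<^bsub>A\<^esub> vb)) = \<one>\<^bsub>A\<^esub>"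
      using vbc by (simp add: A.m_assoc[symmetric])
    moreover have "b \<otimes>\<^bsub>K\<^esub> ((b \<otimes>\<^bsub>K\<^esub> b) \<otimes>\<^bsub>K\<^esub> inv\<^bsub>K\<^esub> (b \<otimes>\<^bsub>K\<^esub> b)) = b" using b by simp
    ultimately show ?thesis by simp
  qed
  finally show ?thesis using w3 by simp
qed



lemma Z2_carrier[simp]: "carrier Z2 = UNIV" by (simp add: Z2_def)
lemma Z2_mult[simp]: "(a, b) \<otimes>\<^bsub>Z2\<^esub> (c, d) = (a + c, b + d)" by (simp add: Z2_def)
lemma Z2_one[simp]: "\<one>\<^bsub>Z2\<^esub> = (0, 0)" by (simp add: Z2_def)

lemma comm_group_Z2: "comm_group Z2"
proof (rule comm_groupI)
  fix x y w :: "int \<times> int"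
  show "x \<otimes>\<^bsub>Z2\<^esub> y \<in> carrier Z2" by simp
  show "x \<otimes>\<^bsub>Z2\<^esub> y \<otimes>\<^bsub>Z2\<^esub> w = x \<otimes>\<^bsub>Z2\<^esub> (y \<otimes>\<^bsub>Z2\<^esub> w)" by (cases x, cases y, cases w) simp
  show "x \<otimes>\<^bsub>Z2\<^esub> y = y \<otimes>\<^bsub>Z2\<^esub> x" by (cases x, cases y) simp
  show "\<one>\<^bsub>Z2\<^esub> \<otimes>\<^bsub>Z2\<^esub> x = x" by (cases x) simp
  show "\<exists>y\<in>carrier Z2. y \<otimes>\<^bsub>Z2\<^esub> x = \<one>\<^bsub>Z2\<^esub>" by (cases x) (rule bexI[of _ "(- fst x, - snd x)"], auto)
next
  show "\<one>\<^bsub>Z2\<^esub> \<in> carrier Z2" by simp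
qed

lemma group_Z2: "group Z2" using comm_group_Z2 comm_group.axioms(2) by blast

lemma kcc[simp]: "kc z w \<in> carrier (Kam z)" by (simp add: K_carrier)

lemma K_letter_inv: "inv\<^bsub>Kam z\<^esub> (kc z [(c, True)]) = kc z [(c, False)]"
  by (simp add: K_inv inv_word_def)

lemma K_gen_rel:
  assumes xb: "hig_relator x b \<in> hig_rels" and f: "f = Inl \<or> f = Inr"
  shows "inv\<^bsub>Kam z\<^esub> (kc z [(f x, True)]) \<otimes>\<^bsub>Kam z\<^esub> kc z [(f b, True)] \<otimes>\<^bsub>Kam z\<^esub> kc z [(f x, True)]
       = kc z [(f b, True)] \<otimes>\<^bsub>Kam z\<^esub> kc z [(f b, True)]"
proof -
  interpret K: group "Kam z" by (rule group_K)
  let ?X = "kc z [(f x, True)]" and ?Y = "kc z [(f b, True)]"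
  have "map_word f (hig_relator x b) \<in> amalg_rels z" using xb f by (auto simp: amalg_rels_eq)
  then have r: "kc z (map_word f (hig_relator x b)) = kc z []" by (rule pres_relator)
  have "map_word f (hig_relator x b) = (((([(f x, False)] @ [(f b, True)]) @ [(f x, True)]) @ [(f b, False)]) @ [(f b, False)])"
    by (simp add: hig_relator_def)
  then have "kc z (map_word f (hig_relator x b)) =
      kc z [(f x, False)] \<otimes>\<^bsub>Kam z\<^esub> ?Y \<otimes>\<^bsub>Kam z\<^esub> ?X \<otimes>\<^bsub>Kam z\<^esub> kc z [(f b, False)] \<otimes>\<^bsub>Kam z\<^esub> kc z [(f b, False)]"
    by (simp only: K_mult)
  then have e: "inv\<^bsub>Kam z\<^esub> ?X \<otimes>\<^bsub>Kam z\<^esub> ?Y \<otimes>\<^bsub>Kam z\<^esub> ?X \<otimes>\<^bsub>Kam z\<^esub> inv\<^bsub>Kam z\<^esub> ?Y \<otimes>\<^bsub>Kam z\<^esub> inv\<^bsub>Kam z\<^esub> ?Y = \<one>\<^bsub>Kam z\<^esub>"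
    using r by (simp add: K_letter_inv K_one)
  let ?p = "inv\<^bsub>Kam z\<^esub> ?X \<otimes>\<^bsub>Kam z\<^esub> ?Y \<otimes>\<^bsub>Kam z\<^esub> ?X"
  have pc: "?p \<in> carrier (Kam z)" by simp
  have "?p \<otimes>\<^bsub>Kam z\<^esub> inv\<^bsub>Kam z\<^esub> ?Y \<otimes>\<^bsub>Kam z\<^esub> inv\<^bsub>Kam z\<^esub> ?Y \<otimes>\<^bsub>Kam z\<^esub> ?Y \<otimes>\<^bsub>Kam z\<^esub> ?Y = ?Y \<otimes>\<^bsub>Kam z\<^esub> ?Y"
    using e by simp
  moreover have "?p \<otimes>\<^bsub>Kam z\<^esub> inv\<^bsub>Kam z\<^esub> ?Y \<otimes>\<^bsub>Kam z\<^esub> inv\<^bsub>Kam z\<^esub> ?Y \<otimes>\<^bsub>Kam z\<^esub> ?Y \<otimes>\<^bsub>Kam z\<^esub> ?Y = ?p"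
    using pc by (simp add: K.m_assoc)
  ultimately show ?thesis by simp
qed

lemma partner: "\<exists>x. hig_relator x b \<in> hig_rels"
  by (cases b) (auto simp: hig_rels_def)

lemma T_all:
  assumes W: "subgroup W (Z2 \<times>\<times> Kam z)" and surj: "\<forall>g\<in>carrier (Kam z). \<exists>v. (v, g) \<in> W"
  shows "((0,0), kc z w) \<in> W"
proof -
  interpret K: group "Kam z" by (rule group_K)
  interpret P: group "Z2 \<times>\<times> Kam z" by (rule DirProd_group[OF group_Z2 group_K])
  interpret W: subgroup W "Z2 \<times>\<times> Kam z" by (rule W)
  have T: "((0,0), kc z [(c, True)]) \<in> W" for c
  proof -
    obtain f y where f: "f = Inl \<or> f = Inr" and c: "c = f y" by (cases c) auto
    obtain x where x: "hig_relator x y \<in> hig_rels" using partner by blast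
    obtain va where va: "(va, kc z [(f x, True)]) \<in> W" using surj kcc by blast
    obtain vb where vb: "(vb, kc z [(f y, True)]) \<in> W" using surj kcc by blast
    have "(\<one>\<^bsub>Z2\<^esub>, kc z [(f y, True)]) \<in> W"
      by (rule gen_lemma[OF comm_group_Z2 group_K W _ _ K_gen_rel[OF x f] va vb]) simp_all
    then show ?thesis using c by simp
  qed
  have F: "((0,0), kc z [(c, False)]) \<in> W" for c
  proof -
    have "inv\<^bsub>Z2 \<times>\<times> Kam z\<^esub> ((0,0), kc z [(c, True)]) \<in> W" using T by simp
    moreover have "inv\<^bsub>Z2 \<times>\<times> Kam z\<^esub> ((0::int,0::int), kc z [(c, True)]) = (inv\<^bsub>Z2\<^esub> \<one>\<^bsub>Z2\<^esub>, kc z [(c, False)])"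
      using inv_DirProd[OF group_Z2 group_K, of "(0,0)" "kc z [(c, True)]"] by (simp add: K_letter_inv)
    moreover have "inv\<^bsub>Z2\<^esub> \<one>\<^bsub>Z2\<^esub> = (0,0)" using monoid.inv_one[OF group.is_monoid[OF group_Z2]] by simp
    ultimately show ?thesis by simp
  qed
  show ?thesis
  proof (induction w)
    case Nil
    show ?case using W.one_closed by (simp add: K_one)
  next
    case (Cons l w)
    obtain c b where l: "l = (c, b)" by force
    have "((0,0), kc z [l]) \<in> W" using T F l by (cases b) auto
    then have "((0,0), kc z [l]) \<otimes>\<^bsub>Z2 \<times>\<times> Kam z\<^esub> ((0,0), kc z w) \<in> W" using Cons W.m_closed by blast
    then show ?case by (simp add: K_mult)
  qed
qed



theorem theorem4p3:
  fixes z :: "hgen word set"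
    and fK :: "(hgen + hgen) word set \<Rightarrow> (hgen + hgen) word set \<Rightarrow> int"
    and fN :: "int \<times> int \<Rightarrow> int \<times> int \<Rightarrow> int"
    and H :: "((int \<times> (int \<times> int)) \<times> (int \<times> (hgen + hgen) word set)) set set"
  assumes "z \<in> carrier Hig"
    and "\<forall>n::int. n \<noteq> 0 \<longrightarrow> z [^]\<^bsub>Hig\<^esub> n \<noteq> \<one>\<^bsub>Hig\<^esub>"
    and "H2_generator (Kam z) fK"
    and "H2_generator Z2 fN"
    and "subgroup H (Ggrp z fK fN)"
    and "p_map ` H = carrier (Kam z)"
  shows "e_elem z fK fN \<in> H"
proof -
  interpret zctx z using assms(1,2) by unfold_locales
  have NT: "\<forall>k::int. k \<noteq> 0 \<longrightarrow> \<not> coboundary2 (Kam z) (\<lambda>g h. k * fK g h)"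
    using nontorsion[OF assms(3)] by blast
  have cocK: "cocycle2 (Kam z) fK" using assms(3) by (simp add: H2_generator_def)
  have cocN: "cocycle2 Z2 fN" using assms(4) by (simp add: H2_generator_def)
  interpret K: group "Kam z" by (rule group_K)
  interpret L: group "ext_group (Kam z) fK" by (rule group_ext[OF group_K cocK])
  interpret N: group "ext_group Z2 fN" by (rule group_ext[OF group_Z2 cocN])
  have NLe: "NL z fK fN = ext_group Z2 fN \<times>\<times> ext_group (Kam z) fK" by (simp add: NL_def)
  interpret G: group "NL z fK fN" unfolding NLe by (rule DirProd_group) unfold_locales
  define cN where "cN = ext_central Z2 fN"
  define cL where "cL = ext_central (Kam z) fK"
  define D where "D = diagZ z fK fN"
  have Deq: "D = {(cN n, cL n) | n. True}" by (simp add: D_def diagZ_def cN_def cL_def)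
  have cNc: "cN n \<in> carrier (ext_group Z2 fN)" for n unfolding cN_def by (rule ext_central_carrier[OF group_Z2])
  have cLc: "cL n \<in> carrier (ext_group (Kam z) fK)" for n unfolding cL_def by (rule ext_central_carrier[OF group_K])
  have dc: "(cN n, cL n) \<in> carrier (NL z fK fN)" for n using cNc cLc by (simp add: NLe)
  have dmul: "(cN a, cL a) \<otimes>\<^bsub>NL z fK fN\<^esub> (cN b, cL b) = (cN (a + b), cL (a + b))" for a b
    by (simp add: NLe cN_def cL_def ext_central_mult[OF group_Z2 cocN] ext_central_mult[OF group_K cocK])
  have dinv: "inv\<^bsub>NL z fK fN\<^esub> (cN a, cL a) = (cN (- a), cL (- a))" for a
    unfolding NLe using inv_DirProd[OF N.is_group L.is_group cNc cLc]
    by (simp add: cN_def cL_def ext_central_inv[OF group_Z2 cocN] ext_central_inv[OF group_K cocK])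
  have dcomm: "(cN a, cL a) \<otimes>\<^bsub>NL z fK fN\<^esub> x = x \<otimes>\<^bsub>NL z fK fN\<^esub> (cN a, cL a)"
    if "x \<in> carrier (NL z fK fN)" for a x
  proof -
    obtain x1 x2 where x0: "x = (x1, x2)" by (cases x) simp
    have x: "x = (x1, x2)" "x1 \<in> carrier (ext_group Z2 fN)" "x2 \<in> carrier (ext_group (Kam z) fK)"
      using that x0 by (simp_all add: NLe)
    show ?thesis using x ext_central_comm(1)[OF group_Z2 cocN x(2)] ext_central_comm(1)[OF group_K cocK x(3)]
      by (simp add: NLe cN_def cL_def)
  qed
  have Dsub: "subgroup D (NL z fK fN)"
  proof (rule G.subgroupI)
    show "D \<subseteq> carrier (NL z fK fN)" using dc by (auto simp: Deq)
    show "D \<noteq> {}" unfolding Deq by blast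
    fix a b assume "a \<in> D" "b \<in> D"
    then obtain m n where "a = (cN m, cL m)" "b = (cN n, cL n)" by (auto simp: Deq)
    then show "inv\<^bsub>NL z fK fN\<^esub> a \<in> D" "a \<otimes>\<^bsub>NL z fK fN\<^esub> b \<in> D" by (auto simp: Deq dinv dmul)
  qed
  have Dnorm: "D \<lhd> NL z fK fN"
    unfolding G.normal_inv_iff
  proof (intro conjI Dsub ballI)
    fix x h assume x: "x \<in> carrier (NL z fK fN)" and h: "h \<in> D"
    then obtain n where hn: "h = (cN n, cL n)" by (auto simp: Deq)
    have "x \<otimes>\<^bsub>NL z fK fN\<^esub> h \<otimes>\<^bsub>NL z fK fN\<^esub> inv\<^bsub>NL z fK fN\<^esub> x = h \<otimes>\<^bsub>NL z fK fN\<^esub> (x \<otimes>\<^bsub>NL z fK fN\<^esub> inv\<^bsub>NL z fK fN\<^esub> x)"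
    proof -
      have "x \<otimes>\<^bsub>NL z fK fN\<^esub> h = h \<otimes>\<^bsub>NL z fK fN\<^esub> x" using dcomm[OF x, of n] hn by simp
      then show ?thesis using x dc[of n] hn by (simp add: G.m_assoc)
    qed
    also have "\<dots> = h" using x dc[of n] hn by simp
    finally show "x \<otimes>\<^bsub>NL z fK fN\<^esub> h \<otimes>\<^bsub>NL z fK fN\<^esub> inv\<^bsub>NL z fK fN\<^esub> x \<in> D" using h by simp
  qed
  interpret DN: normal D "NL z fK fN" by (rule Dnorm)
  have Hsub: "subgroup H (NL z fK fN Mod D)" using assms(5) by (simp add: Ggrp_def D_def)
  define U where "U = \<Union>H"
  have Usub: "subgroup U (NL z fK fN)" unfolding U_def by (rule DN.factgroup_subgroup_union_subgroup[OF Hsub])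
  have Uchar: "U = {x \<in> carrier (NL z fK fN). D #>\<^bsub>NL z fK fN\<^esub> x \<in> H}"
    unfolding U_def by (rule DN.factgroup_subgroup_union_char[OF Hsub])
  interpret U: subgroup U "NL z fK fN" by (rule Usub)
  have DU: "(cN n, cL n) \<in> U" for n
  proof -
    have hD: "(cN n, cL n) \<in> D" by (auto simp: Deq)
    have "D #>\<^bsub>NL z fK fN\<^esub> (cN n, cL n) = D" by (rule DN.rcos_const[OF G.is_group hD])
    moreover have "D \<in> H" using subgroup.one_closed[OF Hsub] by simp
    ultimately have X: "D #>\<^bsub>NL z fK fN\<^esub> (cN n, cL n) \<in> H" by (simp only:)
    show ?thesis unfolding Uchar using X dc[of n] by blast
  qed
  have surjU: "\<exists>x\<in>U. snd (snd x) = g" if g: "g \<in> carrier (Kam z)" for g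
  proof -
    obtain X where X: "X \<in> H" "g = p_map X" using g assms(6) by (metis imageE)
    have "X \<in> carrier (NL z fK fN Mod D)" using X(1) subgroup.subset[OF Hsub] by blast
    then obtain x where x: "x \<in> carrier (NL z fK fN)" "X = D #>\<^bsub>NL z fK fN\<^esub> x"
      by (auto simp: carrier_FactGroup)
    have xU: "x \<in> U" unfolding Uchar using x X(1) by blast
    have same: "snd (snd y) = snd (snd x)" if yX: "y \<in> X" for y
    proof -
      obtain d where d: "d \<in> D" "y = d \<otimes>\<^bsub>NL z fK fN\<^esub> x" using yX x(2) by (auto simp: r_coset_def)
      obtain n where dn: "d = (cN n, cL n)" using d(1) by (auto simp: Deq)
      obtain x1 x2 where x0: "x = (x1, x2)" by (cases x) simp
      have x2c: "x2 \<in> carrier (ext_group (Kam z) fK)" using x(1) x0 by (simp add: NLe)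
      have "snd (snd y) = snd (cL n \<otimes>\<^bsub>ext_group (Kam z) fK\<^esub> x2)" using d(2) dn x0 by (simp add: NLe)
      also have "\<dots> = snd x2" unfolding cL_def using ext_central_comm(2)[OF group_K cocK x2c] by simp
      finally show ?thesis using x0 by simp
    qed
    have xX: "x \<in> X" using x G.rcos_self[OF x(1) Dsub] by simp
    have "p_map X = snd (snd x)" unfolding p_map_def
    proof (rule the_equality)
      show "\<exists>y\<in>X. snd (snd y) = snd (snd x)" using xX by blast
    next
      fix k assume "\<exists>y\<in>X. snd (snd y) = k"
      then show "k = snd (snd x)" using same by blast
    qed
    then show ?thesis using xU X(2) by blast
  qed
  define Q where "Q x = (snd (fst x), snd (snd x))"
    for x :: "(int \<times> (int \<times> int)) \<times> (int \<times> (hgen + hgen) word set)"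
  have Qhom: "Q \<in> hom (NL z fK fN) (Z2 \<times>\<times> Kam z)"
  proof (rule homI)
    fix x assume "x \<in> carrier (NL z fK fN)"
    then show "Q x \<in> carrier (Z2 \<times>\<times> Kam z)" by (auto simp: NLe Q_def)
  next
    fix x y assume x: "x \<in> carrier (NL z fK fN)" and y: "y \<in> carrier (NL z fK fN)"
    obtain a v b g where xe: "x = ((a, v), (b, g))" by (cases x) auto
    obtain a' v' b' g' where ye: "y = ((a', v'), (b', g'))" by (cases y) auto
    show "Q (x \<otimes>\<^bsub>NL z fK fN\<^esub> y) = Q x \<otimes>\<^bsub>Z2 \<times>\<times> Kam z\<^esub> Q y"
      using xe ye by (simp add: NLe Q_def)
  qed
  interpret Qh: group_hom "NL z fK fN" "Z2 \<times>\<times> Kam z" Q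
    unfolding group_hom_def group_hom_axioms_def
    using G.is_group DirProd_group[OF group_Z2 group_K] Qhom by blast
  define W where "W = Q ` U"
  have Wsub: "subgroup W (Z2 \<times>\<times> Kam z)" unfolding W_def by (rule Qh.subgroup_img_is_subgroup[OF Usub])
  have surjW: "\<forall>g\<in>carrier (Kam z). \<exists>v. (v, g) \<in> W"
  proof
    fix g assume "g \<in> carrier (Kam z)"
    then obtain x where "x \<in> U" "snd (snd x) = g" using surjU by blast
    then have "(snd (fst x), g) \<in> W" unfolding W_def Q_def by force
    then show "\<exists>v. (v, g) \<in> W" by blast
  qed
  have U0: "\<exists>u\<in>U. Q u = ((0,0), g)" if g: "g \<in> carrier (Kam z)" for g
  proof -
    obtain w where "g = kc z w" using g by (auto simp: K_carrier)
    then have "((0,0), g) \<in> W" using T_all[OF Wsub surjW] by simp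
    then show ?thesis unfolding W_def by force
  qed
  have S1: "\<exists>l. (\<one>\<^bsub>ext_group Z2 fN\<^esub>, l) \<in> U \<and> snd l = g" if g: "g \<in> carrier (Kam z)" for g
  proof -
    obtain u where u: "u \<in> U" "Q u = ((0,0), g)" using U0[OF g] by blast
    obtain a v b g' where ue: "u = ((a, v), (b, g'))" by (cases u) auto
    have vg: "v = (0,0)" "g' = g" using u(2) ue by (simp_all add: Q_def)
    define n0 where "n0 = - (a + fN (0,0) (0,0))"
    have du: "(cN n0, cL n0) \<otimes>\<^bsub>NL z fK fN\<^esub> u \<in> U" using DU[of n0] u(1) by simp
    have c1: "cN n0 \<otimes>\<^bsub>ext_group Z2 fN\<^esub> (a, (0,0)) = (n0 + a, (0,0))"
      unfolding cN_def using ext_central_comm(2)[OF group_Z2 cocN, of "(a,(0,0))" n0] by simp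
    have c2: "cL n0 \<otimes>\<^bsub>ext_group (Kam z) fK\<^esub> (b, g) = (n0 + b, g)"
      unfolding cL_def using ext_central_comm(2)[OF group_K cocK, of "(b,g)" n0] g by simp
    have "(cN n0, cL n0) \<otimes>\<^bsub>NL z fK fN\<^esub> u = (\<one>\<^bsub>ext_group Z2 fN\<^esub>, (n0 + b, g))"
      using ue vg c1 c2 by (simp add: NLe n0_def)
    then show ?thesis using du by (intro exI[of _ "(n0 + b, g)"]) simp
  qed
  define S where "S = {l \<in> carrier (ext_group (Kam z) fK). (\<one>\<^bsub>ext_group Z2 fN\<^esub>, l) \<in> U}"
  have oneU: "(\<one>\<^bsub>ext_group Z2 fN\<^esub>, \<one>\<^bsub>ext_group (Kam z) fK\<^esub>) \<in> U"
    using U.one_closed by (simp add: NLe del: ext_one)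
  have Ssub: "subgroup S (ext_group (Kam z) fK)"
  proof (rule L.subgroupI)
    show "S \<subseteq> carrier (ext_group (Kam z) fK)" by (auto simp: S_def)
    show "S \<noteq> {}" using oneU unfolding S_def by blast
    fix a b assume a: "a \<in> S" and b: "b \<in> S"
    have ac: "a \<in> carrier (ext_group (Kam z) fK)" and bc: "b \<in> carrier (ext_group (Kam z) fK)"
      using a b by (simp_all add: S_def)
    have aU: "(\<one>\<^bsub>ext_group Z2 fN\<^esub>, a) \<in> U" and bU: "(\<one>\<^bsub>ext_group Z2 fN\<^esub>, b) \<in> U"
      using a b by (simp_all add: S_def)
    have "inv\<^bsub>NL z fK fN\<^esub> (\<one>\<^bsub>ext_group Z2 fN\<^esub>, a) \<in> U" using aU by simp
    moreover have "inv\<^bsub>NL z fK fN\<^esub> (\<one>\<^bsub>ext_group Z2 fN\<^esub>, a) = (\<one>\<^bsub>ext_group Z2 fN\<^esub>, inv\<^bsub>ext_group (Kam z) fK\<^esub> a)"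
      unfolding NLe using inv_DirProd[OF N.is_group L.is_group N.one_closed ac] by (simp del: ext_one)
    ultimately show "inv\<^bsub>ext_group (Kam z) fK\<^esub> a \<in> S" using L.inv_closed[OF ac] unfolding S_def by simp
    have "(\<one>\<^bsub>ext_group Z2 fN\<^esub>, a) \<otimes>\<^bsub>NL z fK fN\<^esub> (\<one>\<^bsub>ext_group Z2 fN\<^esub>, b) \<in> U" using aU bU by simp
    moreover have "(\<one>\<^bsub>ext_group Z2 fN\<^esub>, a) \<otimes>\<^bsub>NL z fK fN\<^esub> (\<one>\<^bsub>ext_group Z2 fN\<^esub>, b) = (\<one>\<^bsub>ext_group Z2 fN\<^esub>, a \<otimes>\<^bsub>ext_group (Kam z) fK\<^esub> b)"
      unfolding NLe by (simp del: ext_one ext_mult)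
    ultimately show "a \<otimes>\<^bsub>ext_group (Kam z) fK\<^esub> b \<in> S" using L.m_closed[OF ac bc] unfolding S_def by simp
  qed
  have surjS: "\<forall>g\<in>carrier (Kam z). \<exists>s\<in>S. snd s = g"
  proof
    fix g assume g: "g \<in> carrier (Kam z)"
    then obtain l where l: "(\<one>\<^bsub>ext_group Z2 fN\<^esub>, l) \<in> U" "snd l = g" using S1 by blast
    have "l \<in> carrier (ext_group (Kam z) fK)" using U.mem_carrier[OF l(1)] by (simp add: NLe del: ext_one)
    then show "\<exists>s\<in>S. snd s = g" using l by (auto simp: S_def simp del: ext_one)
  qed
  have "cL 1 \<in> S" unfolding cL_def by (rule key_L[OF group_K assms(3) NT Ssub surjS])
  then have e1: "(\<one>\<^bsub>ext_group Z2 fN\<^esub>, cL 1) \<in> U" by (simp add: S_def del: ext_one)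
  have "(cN (-1), cL (-1)) \<otimes>\<^bsub>NL z fK fN\<^esub> (\<one>\<^bsub>ext_group Z2 fN\<^esub>, cL 1) \<in> U" using DU e1 by simp
  moreover have "(cN (-1), cL (-1)) \<otimes>\<^bsub>NL z fK fN\<^esub> (\<one>\<^bsub>ext_group Z2 fN\<^esub>, cL 1) = (cN (-1), \<one>\<^bsub>ext_group (Kam z) fK\<^esub>)"
  proof -
    have "cN (-1) \<otimes>\<^bsub>ext_group Z2 fN\<^esub> \<one>\<^bsub>ext_group Z2 fN\<^esub> = cN (-1)" using cNc by (simp del: ext_one)
    moreover have "cL (-1) \<otimes>\<^bsub>ext_group (Kam z) fK\<^esub> cL 1 = \<one>\<^bsub>ext_group (Kam z) fK\<^esub>"
      unfolding cL_def by (simp add: ext_central_mult[OF group_K cocK] ext_central_0 del: ext_one)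
    ultimately show ?thesis unfolding NLe by (simp del: ext_one ext_mult)
  qed
  ultimately have e2: "(cN (-1), \<one>\<^bsub>ext_group (Kam z) fK\<^esub>) \<in> U" by simp
  have "inv\<^bsub>NL z fK fN\<^esub> (cN (-1), \<one>\<^bsub>ext_group (Kam z) fK\<^esub>) \<in> U" using e2 by simp
  moreover have "inv\<^bsub>NL z fK fN\<^esub> (cN (-1), \<one>\<^bsub>ext_group (Kam z) fK\<^esub>) = (cN 1, \<one>\<^bsub>ext_group (Kam z) fK\<^esub>)"
    unfolding NLe using inv_DirProd[OF N.is_group L.is_group cNc L.one_closed]
    by (simp add: cN_def ext_central_inv[OF group_Z2 cocN] del: ext_one)
  ultimately have e3: "(cN 1, \<one>\<^bsub>ext_group (Kam z) fK\<^esub>) \<in> U" by simp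
  then have "D #>\<^bsub>NL z fK fN\<^esub> (cN 1, \<one>\<^bsub>ext_group (Kam z) fK\<^esub>) \<in> H" unfolding Uchar by blast
  then show ?thesis by (simp add: e_elem_def D_def cN_def del: ext_one)
qed


end
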